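(* Let $\mathcal{C}=\mathrm{CSS}(C_X,C_Z)$ be an $[[n,k,d]]_2$ CSS code with $C_X=\ker H_X$, $C_Z=\ker H_Z$, of positive dimension $k>0$, which exhibits $(c_1,c_2,\epsilon_0)$-clustering for some constants $c_1,c_2,\epsilon_0>0$. Let $$\epsilon<\frac{1}{1000}\cdot\min\left\{\frac{\epsilon_0}{2},\ \frac{c_2}{4c_1},\ \frac{d}{2c_1 n}\right\},$$ and let $\rho$ be any (possibly mixed) $n$-qubit state with $\mathrm{Tr}(\mathbf{H}\rho)\le\epsilon$, where $\mathbf{H}$ is the code Hamiltonian of $\mathcal{C}$. Then at least one of the distributions $D_X^\rho$, $D_Z^\rho$ is $(\mu,\delta)$-spread with $\mu=0.02$ and $\delta=c_2$.
   Context: All vectors are over $\mathbb{F}_2$. For $y\in\mathbb{F}_2^n$, $|y|$ is the Hamming weight; for a linear code $C$, $|y|_C=\min_{y'\in C}|y+y'|$; for sets $S,T$, $\mathrm{dis}(S,T)=\min_{s\in S,t\in T}|s-t|$. A CSS code $\mathcal{C}=\mathrm{CSS}(C_X,C_Z)$ is given by parity-check matrices $H_X\in\mathbb{F}_2^{m_X\times n}$, $H_Z\in\mathbb{F}_2^{m_Z\times n}$ with $C_X=\ker H_X$, $C_Z=\ker H_Z$, $C_X^\perp\subseteq C_Z$; the code space is $\mathrm{span}\{|y+C_X^\perp\rangle : y\in C_Z\}$ where $|S\rangle$ is the uniform superposition over $S$; dimension $k=\dim C_Z-\dim C_X^\perp$, distance $d=\min\{|y|: y\in (C_Z\setminus C_X^\perp)\cup(C_X\setminus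 C_Z^\perp)\}$. Code Hamiltonian: $\mathbf{H}=\frac12(\mathbf{H}_X+\mathbf{H}_Z)$ with $\mathbf{H}_X=\frac{1}{m_X}\sum_{y\in\mathrm{rows}(H_X)}\frac{I-X^y}{2}$, $\mathbf{H}_Z=\frac{1}{m_Z}\sum_{y\in\mathrm{rows}(H_Z)}\frac{I-Z^y}{2}$ ($X^y,Z^y$ are tensor products of Pauli operators on the support of $y$). Let $G_X^\epsilon=\{y\in\mathbb{F}_2^n:|H_Xy|\le\epsilon m_X\}$ and $G_Z^\epsilon=\{y\in\mathbb{F}_2^n:|H_Zy|\le\epsilon m_Z\}$. $\mathcal{C}$ exhibits $(c_1,c_2,\epsilon_0)$-clustering if for all $0<\epsilon<\epsilon_0$: every $y\in G_X^\epsilon$ has $|y|_{C_Z^\perp}\le c_1\epsilon n$ or $|y|_{C_Z^\perp}\ge c_2 n$, and every $y\in G_Z^\epsilon$ has $|y|_{C_X^\perp}\le c_1\epsilon n$ or $|y|_{C_X^\perp}\ge c_2 n$. For an $n$-qubit state $\rho$, $D_X^\rho$ and $D_Z^\rho$ denote the distributions on $\mathbb{F}_2^n$ obtained by measuring all qubits of $\rho$ in the $X$, resp. $Z$, basis. A distribution $D$ on $\mathbb{F}_2^n$ is $(\mu,\delta)$-spread if there are $S_0,S_1\subseteq\mathbb{F}_2^n$ with $D(S_0)\ge\mu$, $D(S_1)\ge\mu$ and $\mathrm{dis}(S_0,S_1)\ge\delta n$. *)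

theory Defs
  imports Complex_Main
begin

text \<open>A vector of F_2^n is a function nat => bool vanishing outside {0..<n}.\<close>

definition F2vec :: "nat \<Rightarrow> (nat \<Rightarrow> bool) set" where
  "F2vec n = {y. \<forall>i. n \<le> i \<longrightarrow> \<not> y i}"

definition vadd :: "(nat \<Rightarrow> bool) \<Rightarrow> (nat \<Rightarrow> bool) \<Rightarrow> (nat \<Rightarrow> bool)" where
  "vadd x y = (\<lambda>i. x i \<noteq> y i)"

definition hw :: "nat \<Rightarrow> (nat \<Rightarrow> bool) \<Rightarrow> nat" where
  "hw n y = card {i. i < n \<and> y i}"

text \<open>Standard inner product over F_2 (True = 1).\<close>
definition dot :: "nat \<Rightarrow> (nat \<Rightarrow> bool) \<Rightarrow> (nat \<Rightarrow> bool) \<Rightarrow> bool" where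
  "dot n x y = odd (card {i. i < n \<and> x i \<and> y i})"

definition perp :: "nat \<Rightarrow> (nat \<Rightarrow> bool) set \<Rightarrow> (nat \<Rightarrow> bool) set" where
  "perp n C = {y \<in> F2vec n. \<forall>c\<in>C. \<not> dot n y c}"

text \<open>A parity-check matrix is given by the list of its rows.\<close>
definition kerH :: "nat \<Rightarrow> (nat \<Rightarrow> bool) list \<Rightarrow> (nat \<Rightarrow> bool) set" where
  "kerH n H = {y \<in> F2vec n. \<forall>r\<in>set H. \<not> dot n r y}"

definition synd_wt :: "nat \<Rightarrow> (nat \<Rightarrow> bool) list \<Rightarrow> (nat \<Rightarrow> bool) \<Rightarrow> nat" where
  "synd_wt n H y = length (filter (\<lambda>r. dot n r y) H)"

definition coset_wt :: "nat \<Rightarrow> (nat \<Rightarrow> bool) set \<Rightarrow> (nat \<Rightarrow> bool) \<Rightarrow> nat" where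
  "coset_wt n C y = Min ((\<lambda>y'. hw n (vadd y y')) ` C)"

text \<open>Dimension over F_2 of a linear code C: |C| = 2^dim C.\<close>
definition f2dim :: "(nat \<Rightarrow> bool) set \<Rightarrow> real" where
  "f2dim C = log 2 (real (card C))"

definition css_k :: "nat \<Rightarrow> (nat \<Rightarrow> bool) list \<Rightarrow> (nat \<Rightarrow> bool) list \<Rightarrow> real" where
  "css_k n HX HZ = f2dim (kerH n HZ) - f2dim (perp n (kerH n HX))"

definition css_d :: "nat \<Rightarrow> (nat \<Rightarrow> bool) list \<Rightarrow> (nat \<Rightarrow> bool) list \<Rightarrow> nat" where
  "css_d n HX HZ = Min (hw n ` ((kerH n HZ - perp n (kerH n HX)) \<union> (kerH n HX - perp n (kerH n HZ))))"

definition G_eps :: "nat \<Rightarrow> (nat \<Rightarrow> bool) list \<Rightarrow> real \<Rightarrow> (nat \<Rightarrow> bool) set" where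
  "G_eps n H \<epsilon> = {y \<in> F2vec n. real (synd_wt n H y) \<le> \<epsilon> * real (length H)}"

definition clustering :: "nat \<Rightarrow> (nat \<Rightarrow> bool) list \<Rightarrow> (nat \<Rightarrow> bool) list \<Rightarrow> real \<Rightarrow> real \<Rightarrow> real \<Rightarrow> bool" where
  "clustering n HX HZ c1 c2 \<epsilon>0 \<longleftrightarrow>
     (\<forall>\<epsilon>. 0 < \<epsilon> \<and> \<epsilon> < \<epsilon>0 \<longrightarrow>
        (\<forall>y\<in>G_eps n HX \<epsilon>. real (coset_wt n (perp n (kerH n HZ)) y) \<le> c1 * \<epsilon> * real n
                          \<or> real (coset_wt n (perp n (kerH n HZ)) y) \<ge> c2 * real n) \<and>
        (\<forall>y\<in>G_eps n HZ \<epsilon>. real (coset_wt n (perp n (kerH n HX)) y) \<le> c1 * \<epsilon> * real n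
                          \<or> real (coset_wt n (perp n (kerH n HX)) y) \<ge> c2 * real n))"

text \<open>Operators on (C^2)^{\<otimes> n} as matrices indexed by the computational basis F2vec n.\<close>
type_synonym qop = "(nat \<Rightarrow> bool) \<Rightarrow> (nat \<Rightarrow> bool) \<Rightarrow> complex"

definition mmul :: "nat \<Rightarrow> qop \<Rightarrow> qop \<Rightarrow> qop" where
  "mmul n A B = (\<lambda>x z. \<Sum>y\<in>F2vec n. A x y * B y z)"

definition mtrace :: "nat \<Rightarrow> qop \<Rightarrow> complex" where
  "mtrace n A = (\<Sum>x\<in>F2vec n. A x x)"

definition idop :: qop where
  "idop = (\<lambda>x z. if x = z then 1 else 0)"

definition Xop :: "(nat \<Rightarrow> bool) \<Rightarrow> qop" where
  "Xop y = (\<lambda>x z. if x = vadd z y then 1 else 0)"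

definition Zop :: "nat \<Rightarrow> (nat \<Rightarrow> bool) \<Rightarrow> qop" where
  "Zop n y = (\<lambda>x z. if x = z then (if dot n y z then -1 else 1) else 0)"

definition ham_X :: "(nat \<Rightarrow> bool) list \<Rightarrow> qop" where
  "ham_X HX = (\<lambda>x z. (1 / of_nat (length HX)) * (\<Sum>y\<leftarrow>HX. (idop x z - Xop y x z) / 2))"

definition ham_Z :: "nat \<Rightarrow> (nat \<Rightarrow> bool) list \<Rightarrow> qop" where
  "ham_Z n HZ = (\<lambda>x z. (1 / of_nat (length HZ)) * (\<Sum>y\<leftarrow>HZ. (idop x z - Zop n y x z) / 2))"

definition code_ham :: "nat \<Rightarrow> (nat \<Rightarrow> bool) list \<Rightarrow> (nat \<Rightarrow> bool) list \<Rightarrow> qop" where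
  "code_ham n HX HZ = (\<lambda>x z. (ham_X HX x z + ham_Z n HZ x z) / 2)"

definition density :: "nat \<Rightarrow> qop \<Rightarrow> bool" where
  "density n \<rho> \<longleftrightarrow>
     (\<forall>x\<in>F2vec n. \<forall>z\<in>F2vec n. \<rho> x z = cnj (\<rho> z x)) \<and>
     (\<forall>v :: (nat \<Rightarrow> bool) \<Rightarrow> complex.
        0 \<le> Re (\<Sum>x\<in>F2vec n. \<Sum>z\<in>F2vec n. cnj (v x) * \<rho> x z * v z)) \<and>
     mtrace n \<rho> = 1"

definition born :: "nat \<Rightarrow> qop \<Rightarrow> ((nat \<Rightarrow> bool) \<Rightarrow> complex) \<Rightarrow> real" where
  "born n \<rho> v = Re (\<Sum>x\<in>F2vec n. \<Sum>z\<in>F2vec n. cnj (v x) * \<rho> x z * v z)"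

definition comp_vec :: "(nat \<Rightarrow> bool) \<Rightarrow> (nat \<Rightarrow> bool) \<Rightarrow> complex" where
  "comp_vec x = (\<lambda>z. if z = x then 1 else 0)"

definition had_vec :: "nat \<Rightarrow> (nat \<Rightarrow> bool) \<Rightarrow> (nat \<Rightarrow> bool) \<Rightarrow> complex" where
  "had_vec n x = (\<lambda>z. (if dot n x z then -1 else 1) / of_real (sqrt (2 ^ n)))"

definition D_Z :: "nat \<Rightarrow> qop \<Rightarrow> (nat \<Rightarrow> bool) \<Rightarrow> real" where
  "D_Z n \<rho> x = born n \<rho> (comp_vec x)"

definition D_X :: "nat \<Rightarrow> qop \<Rightarrow> (nat \<Rightarrow> bool) \<Rightarrow> real" where
  "D_X n \<rho> x = born n \<rho> (had_vec n x)"

text \<open>(mu,delta)-spread distribution D on F_2^n; D(S) = sum over S.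
  dis(S0,S1) >= delta n is written pointwise (both sets are nonempty since D(S_i) >= mu > 0).\<close>
definition spread :: "nat \<Rightarrow> ((nat \<Rightarrow> bool) \<Rightarrow> real) \<Rightarrow> real \<Rightarrow> real \<Rightarrow> bool" where
  "spread n D \<mu> \<delta> \<longleftrightarrow>
     (\<exists>S0 S1. S0 \<subseteq> F2vec n \<and> S1 \<subseteq> F2vec n \<and>
        sum D S0 \<ge> \<mu> \<and> sum D S1 \<ge> \<mu> \<and> S0 \<noteq> {} \<and> S1 \<noteq> {} \<and>
        (\<forall>s\<in>S0. \<forall>t\<in>S1. real (hw n (vadd s t)) \<ge> \<delta> * real n))"

end

theory Submission
  imports Defs
begin

definition zv :: "nat \<Rightarrow> bool" where "zv = (\<lambda>_. False)"

lemma F2vec_iff: "y \<in> F2vec n \<longleftrightarrow> (\<forall>i. n \<le> i \<longrightarrow> \<not> y i)"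
  by (simp add: F2vec_def)

lemma zv_F2vec[simp]: "zv \<in> F2vec n" by (simp add: F2vec_def zv_def)

lemma vadd_F2vec[simp]: "x \<in> F2vec n \<Longrightarrow> y \<in> F2vec n \<Longrightarrow> vadd x y \<in> F2vec n"
  by (auto simp: F2vec_def vadd_def)

lemma vadd_comm: "vadd x y = vadd y x" by (auto simp: vadd_def)
lemma vadd_assoc: "vadd (vadd x y) z = vadd x (vadd y z)" by (auto simp: vadd_def)
lemma vadd_self[simp]: "vadd x x = zv" by (auto simp: vadd_def zv_def)
lemma vadd_zv[simp]: "vadd x zv = x" "vadd zv x = x" by (auto simp: vadd_def zv_def)
lemma vadd_cancel[simp]: "vadd (vadd x y) y = x" "vadd y (vadd y x) = x" by (auto simp: vadd_def)
lemma vadd_eq_zv: "vadd x y = zv \<longleftrightarrow> x = y" by (auto simp: vadd_def zv_def fun_eq_iff)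

lemma finite_F2vec[simp]: "finite (F2vec n)"
proof -
  have "F2vec n = (\<lambda>S i. i \<in> S) ` Pow {..<n}"
  proof (rule set_eqI, rule iffI)
    fix y assume "y \<in> F2vec n"
    then have "y = (\<lambda>i. i \<in> {i. y i})" "{i. y i} \<in> Pow {..<n}"
      by (auto simp: F2vec_def) (meson not_le)
    then show "y \<in> (\<lambda>S i. i \<in> S) ` Pow {..<n}" by blast
  qed (auto simp: F2vec_def)
  then show ?thesis by simp
qed

lemma dot_sym: "dot n x y = dot n y x"
  unfolding dot_def by (simp add: conj_commute)

lemma card_symdiff_parity:
  assumes "finite A" "finite B"
  shows "odd (card ((A - B) \<union> (B - A))) \<longleftrightarrow> (odd (card A) \<noteq> odd (card B))"
proof -
  have "card ((A - B) \<union> (B - A)) = card (A - B) + card (B - A)"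
    by (rule card_Un_disjoint) (use assms in auto)
  moreover have "card A = card (A - B) + card (A \<inter> B)"
    using assms by (metis Diff_Diff_Int Int_lower1 card_Diff_subset_Int card_mono
        add.commute le_add_diff_inverse Diff_subset card_Diff_subset finite_Int)
  moreover have "card B = card (B - A) + card (A \<inter> B)"
    using assms by (metis Diff_Diff_Int Int_commute Int_lower1 card_Diff_subset_Int card_mono
        add.commute le_add_diff_inverse Diff_subset card_Diff_subset finite_Int)
  ultimately show ?thesis by (auto simp: even_add)
qed

lemma dot_vadd_left: "dot n (vadd a b) c = (dot n a c \<noteq> dot n b c)"
proof -
  let ?A = "{i. i < n \<and> a i \<and> c i}" and ?B = "{i. i < n \<and> b i \<and> c i}"
  have "{i. i < n \<and> vadd a b i \<and> c i} = (?A - ?B) \<union> (?B - ?A)"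
    by (auto simp: vadd_def)
  then show ?thesis unfolding dot_def
    using card_symdiff_parity[of ?A ?B] by simp
qed

lemma dot_vadd_right: "dot n c (vadd a b) = (dot n c a \<noteq> dot n c b)"
  using dot_vadd_left dot_sym by metis

lemma dot_zv[simp]: "\<not> dot n zv c" "\<not> dot n c zv" by (auto simp: dot_def zv_def)

definition sgc :: "bool \<Rightarrow> complex" where "sgc b = (if b then -1 else 1)"

lemma sgc_mult: "sgc a * sgc b = sgc (a \<noteq> b)" by (auto simp: sgc_def)
lemma sgc_not: "sgc (\<not> a) = - sgc a" by (auto simp: sgc_def)
lemma cnj_sgc[simp]: "cnj (sgc a) = sgc a" by (auto simp: sgc_def)

lemma card_F2vec: "card (F2vec n) = 2 ^ n"
proof -
  have e: "F2vec n = (\<lambda>S i. i \<in> S) ` Pow {..<n}"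
  proof (rule set_eqI, rule iffI)
    fix y assume "y \<in> F2vec n"
    then have "y = (\<lambda>i. i \<in> {i. y i})" "{i. y i} \<in> Pow {..<n}"
      by (auto simp: F2vec_def) (meson not_le)
    then show "y \<in> (\<lambda>S i. i \<in> S) ` Pow {..<n}" by blast
  qed (auto simp: F2vec_def)
  have "inj_on (\<lambda>S i. i \<in> S) (Pow {..<n})"
    by (rule inj_onI) (auto simp: fun_eq_iff)
  then show ?thesis unfolding e by (simp add: card_image card_Pow)
qed

lemma inv_sum_zero:
  fixes f :: "'a \<Rightarrow> complex"
  assumes "\<And>x. x \<in> B \<Longrightarrow> g x \<in> B" "\<And>x. x \<in> B \<Longrightarrow> g (g x) = x"
    "\<And>x. x \<in> B \<Longrightarrow> f (g x) = - f x"
  shows "sum f B = 0"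
proof -
  have "bij_betw g B B"
    by (rule bij_betw_byWitness[where f'=g]) (use assms in auto)
  then have "sum (\<lambda>x. f (g x)) B = sum f B" by (rule sum.reindex_bij_betw)
  moreover have "sum (\<lambda>x. f (g x)) B = - sum f B"
    using assms(3) by (simp add: sum_negf)
  ultimately show ?thesis by simp
qed

lemma char_sum_shift:
  assumes "\<And>x. x \<in> B \<Longrightarrow> vadd x r \<in> B" "dot n r w"
  shows "(\<Sum>x\<in>B. sgc (dot n x w)) = 0"
  by (rule inv_sum_zero[where g="\<lambda>x. vadd x r"])
     (use assms in \<open>auto simp: dot_vadd_left sgc_not\<close>)

lemma char_sum_full:
  assumes "w \<in> F2vec n"
  shows "(\<Sum>x\<in>F2vec n. sgc (dot n x w)) = (if w = zv then 2 ^ n else 0)"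
proof (cases "w = zv")
  case True
  then show ?thesis by (simp add: sgc_def card_F2vec)
next
  case False
  then obtain i where i: "w i" using assms by (auto simp: zv_def)
  with assms have "i < n" by (meson F2vec_iff not_le)
  define r where "r = (\<lambda>j. j = i)"
  have rF: "r \<in> F2vec n" using \<open>i < n\<close> by (auto simp: r_def F2vec_def)
  have "{j. j < n \<and> r j \<and> w j} = {i}" using \<open>i < n\<close> i by (auto simp: r_def)
  then have "dot n r w" by (simp add: dot_def)
  then have "(\<Sum>x\<in>F2vec n. sgc (dot n x w)) = 0"
    by (rule char_sum_shift[rotated]) (use rF in auto)
  then show ?thesis using False by simp
qed

lemma sqrt2n: "(complex_of_real (sqrt (2 ^ n)))\<^sup>2 = 2 ^ n"
  by (metis of_real_numeral of_real_power power2_eq_square real_sqrt_pow2 zero_le_numeral zero_le_power)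

lemma had_eq: "had_vec n x z = sgc (dot n x z) / complex_of_real (sqrt (2 ^ n))"
  by (simp add: had_vec_def sgc_def)

lemma cnj_had[simp]: "cnj (had_vec n x z) = had_vec n x z"
  by (simp add: had_eq)

lemma had_mult: "had_vec n x z * had_vec n x z' = sgc (dot n x (vadd z z')) / 2 ^ n"
proof -
  have "had_vec n x z * had_vec n x z' = sgc (dot n x z) * sgc (dot n x z') / (complex_of_real (sqrt (2 ^ n)))\<^sup>2"
    by (simp add: had_eq power2_eq_square)
  also have "\<dots> = sgc (dot n x (vadd z z')) / 2 ^ n"
    by (simp add: sqrt2n sgc_mult dot_vadd_right)
  finally show ?thesis .
qed

lemma had_orth:
  assumes "z \<in> F2vec n" "z' \<in> F2vec n"
  shows "(\<Sum>x\<in>F2vec n. had_vec n x z * had_vec n x z') = (if z = z' then 1 else 0)"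
proof -
  have "(\<Sum>x\<in>F2vec n. had_vec n x z * had_vec n x z') = (\<Sum>x\<in>F2vec n. sgc (dot n x (vadd z z'))) / 2 ^ n"
    by (simp add: had_mult sum_divide_distrib)
  also have "\<dots> = (if z = z' then 1 else 0)"
    using assms by (simp add: char_sum_full vadd_eq_zv)
  finally show ?thesis .
qed

lemma had_orth_r:
  assumes "z \<in> F2vec n" "z' \<in> F2vec n" "r \<in> F2vec n"
  shows "(\<Sum>x\<in>F2vec n. had_vec n x z * had_vec n x z' * sgc (dot n x r)) = (if z' = vadd z r then 1 else 0)"
proof -
  have "(\<Sum>x\<in>F2vec n. had_vec n x z * had_vec n x z' * sgc (dot n x r))
      = (\<Sum>x\<in>F2vec n. sgc (dot n x (vadd (vadd z z') r))) / 2 ^ n"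
    by (simp add: had_mult sum_divide_distrib sgc_mult dot_vadd_right)
  also have "\<dots> = (if z' = vadd z r then 1 else 0)"
    using assms by (simp add: char_sum_full vadd_eq_zv) (auto simp: vadd_def fun_eq_iff)
  finally show ?thesis .
qed

definition qf :: "nat \<Rightarrow> qop \<Rightarrow> ((nat \<Rightarrow> bool) \<Rightarrow> complex) \<Rightarrow> ((nat \<Rightarrow> bool) \<Rightarrow> complex) \<Rightarrow> complex" where
  "qf n \<rho> a b = (\<Sum>z\<in>F2vec n. \<Sum>z'\<in>F2vec n. cnj (a z) * \<rho> z z' * b z')"

lemma born_qf: "born n \<rho> v = Re (qf n \<rho> v v)" by (simp add: born_def qf_def)

lemma qf_addL: "qf n \<rho> (\<lambda>z. a z + b z) c = qf n \<rho> a c + qf n \<rho> b c"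
  by (simp add: qf_def algebra_simps sum.distrib)
lemma qf_addR: "qf n \<rho> c (\<lambda>z. a z + b z) = qf n \<rho> c a + qf n \<rho> c b"
  by (simp add: qf_def algebra_simps sum.distrib)
lemma qf_scaleL: "qf n \<rho> (\<lambda>z. k * a z) b = cnj k * qf n \<rho> a b"
  by (simp add: qf_def algebra_simps sum_distrib_left)
lemma qf_scaleR: "qf n \<rho> a (\<lambda>z. k * b z) = k * qf n \<rho> a b"
  by (simp add: qf_def algebra_simps sum_distrib_left)

lemma density_psd: "density n \<rho> \<Longrightarrow> 0 \<le> Re (qf n \<rho> a a)"
  unfolding density_def qf_def by blast

lemma density_herm: assumes "density n \<rho>" shows "qf n \<rho> b a = cnj (qf n \<rho> a b)"
proof -
  have h: "\<And>x z. x \<in> F2vec n \<Longrightarrow> z \<in> F2vec n \<Longrightarrow> \<rho> x z = cnj (\<rho> z x)"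
    using assms unfolding density_def by blast
  have "cnj (qf n \<rho> a b) = (\<Sum>z\<in>F2vec n. \<Sum>z'\<in>F2vec n. a z * cnj (\<rho> z z') * cnj (b z'))"
    by (simp add: qf_def)
  also have "\<dots> = (\<Sum>z'\<in>F2vec n. \<Sum>z\<in>F2vec n. a z * cnj (\<rho> z z') * cnj (b z'))"
    by (rule sum.swap)
  also have "\<dots> = qf n \<rho> b a"
    unfolding qf_def
    apply (rule sum.cong[OF refl], rule sum.cong[OF refl])
    subgoal for x y using h[of x y] by (simp add: mult.commute mult.left_commute)
    done
  finally show ?thesis by simp
qed

lemma split_bounds:
  assumes rho: "density n \<rho>"
  shows "Re (qf n \<rho> (\<lambda>z. p z + q z) (\<lambda>z. p z + q z)) \<le> 5/4 * Re (qf n \<rho> p p) + 5 * Re (qf n \<rho> q q)"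
    and "Re (qf n \<rho> (\<lambda>z. p z + q z) (\<lambda>z. p z + q z)) \<ge> 3/4 * Re (qf n \<rho> p p) - 3 * Re (qf n \<rho> q q)"
proof -
  have exp: "\<And>c::real. qf n \<rho> (\<lambda>z. of_real c * p z + q z) (\<lambda>z. of_real c * p z + q z)
     = of_real (c*c) * qf n \<rho> p p + qf n \<rho> q q + of_real c * (qf n \<rho> p q + qf n \<rho> q p)"
    by (simp add: qf_addL qf_addR qf_scaleL qf_scaleR algebra_simps)
  have hq: "Re (qf n \<rho> q p) = Re (qf n \<rho> p q)" using density_herm[OF rho, of q p] by simp
  have e1: "\<And>c::real. Re (qf n \<rho> (\<lambda>z. of_real c * p z + q z) (\<lambda>z. of_real c * p z + q z))
     = c*c * Re (qf n \<rho> p p) + Re (qf n \<rho> q q) + 2 * c * Re (qf n \<rho> p q)"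
    using exp hq by simp
  have a: "0 \<le> (1/4)*(1/4) * Re (qf n \<rho> p p) + Re (qf n \<rho> q q) + 2 * (1/4) * Re (qf n \<rho> p q)"
    using e1[of "1/4"] density_psd[OF rho, of "\<lambda>z. of_real (1/4) * p z + q z"] by simp
  have b: "0 \<le> (-1/4)*(-1/4) * Re (qf n \<rho> p p) + Re (qf n \<rho> q q) + 2 * (-1/4) * Re (qf n \<rho> p q)"
    using e1[of "-1/4"] density_psd[OF rho, of "\<lambda>z. of_real (-1/4) * p z + q z"] by simp
  have c: "Re (qf n \<rho> (\<lambda>z. p z + q z) (\<lambda>z. p z + q z)) = Re (qf n \<rho> p p) + Re (qf n \<rho> q q) + 2 * Re (qf n \<rho> p q)"
    using e1[of 1] by simp
  show "Re (qf n \<rho> (\<lambda>z. p z + q z) (\<lambda>z. p z + q z)) \<le> 5/4 * Re (qf n \<rho> p p) + 5 * Re (qf n \<rho> q q)"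
    using a b c by linarith
  show "Re (qf n \<rho> (\<lambda>z. p z + q z) (\<lambda>z. p z + q z)) \<ge> 3/4 * Re (qf n \<rho> p p) - 3 * Re (qf n \<rho> q q)"
    using a b c by linarith
qed

lemma mult_if_delta: "(a::complex) * (if P then 1 else 0) = (if P then a else 0)" by simp

lemma D_Z_eq: assumes "x \<in> F2vec n" shows "D_Z n \<rho> x = Re (\<rho> x x)"
proof -
  have "(\<Sum>z\<in>F2vec n. \<Sum>z'\<in>F2vec n. cnj (comp_vec x z) * \<rho> z z' * comp_vec x z')
      = (\<Sum>z\<in>F2vec n. if z = x then \<rho> x x else 0)"
    by (rule sum.cong[OF refl]) (simp add: comp_vec_def assms mult_if_delta)
  also have "\<dots> = \<rho> x x" using assms by simp
  finally show ?thesis by (simp add: D_Z_def born_def)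
qed

lemma D_X_eq: "D_X n \<rho> x = Re (qf n \<rho> (had_vec n x) (had_vec n x))"
  by (simp add: D_X_def born_qf)

lemma D_nonneg: "density n \<rho> \<Longrightarrow> 0 \<le> D_X n \<rho> x" "density n \<rho> \<Longrightarrow> 0 \<le> D_Z n \<rho> x"
  by (simp_all add: D_X_def D_Z_def born_qf density_psd)

definition rs :: "'a set \<Rightarrow> ('a \<Rightarrow> complex) \<Rightarrow> 'a \<Rightarrow> complex" where
  "rs A f = (\<lambda>z. if z \<in> A then f z else 0)"

lemma qf_rs_had: "qf n \<rho> (rs A (had_vec n x)) (rs A (had_vec n x))
   = (\<Sum>z\<in>F2vec n. \<Sum>z'\<in>F2vec n. if z \<in> A \<and> z' \<in> A then \<rho> z z' * (had_vec n x z * had_vec n x z') else 0)"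
  unfolding qf_def rs_def by (rule sum.cong[OF refl], rule sum.cong[OF refl]) auto

lemma sum_qf_rs:
  "(\<Sum>x\<in>F2vec n. qf n \<rho> (rs A (had_vec n x)) (rs A (had_vec n x))) = (\<Sum>z\<in>F2vec n \<inter> A. \<rho> z z)"
proof -
  have "(\<Sum>x\<in>F2vec n. qf n \<rho> (rs A (had_vec n x)) (rs A (had_vec n x)))
     = (\<Sum>x\<in>F2vec n. \<Sum>z\<in>F2vec n. \<Sum>z'\<in>F2vec n. if z \<in> A \<and> z' \<in> A then \<rho> z z' * (had_vec n x z * had_vec n x z') else 0)"
    by (simp add: qf_rs_had)
  also have "\<dots> = (\<Sum>z\<in>F2vec n. \<Sum>x\<in>F2vec n. \<Sum>z'\<in>F2vec n. if z \<in> A \<and> z' \<in> A then \<rho> z z' * (had_vec n x z * had_vec n x z') else 0)"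
    by (rule sum.swap)
  also have "\<dots> = (\<Sum>z\<in>F2vec n. \<Sum>z'\<in>F2vec n. \<Sum>x\<in>F2vec n. if z \<in> A \<and> z' \<in> A then \<rho> z z' * (had_vec n x z * had_vec n x z') else 0)"
    by (rule sum.cong[OF refl], rule sum.swap)
  also have "\<dots> = (\<Sum>z\<in>F2vec n. \<Sum>z'\<in>F2vec n. if z \<in> A \<and> z' \<in> A then \<rho> z z' * (if z = z' then 1 else 0) else 0)"
    apply (rule sum.cong[OF refl], rule sum.cong[OF refl])
    subgoal for z z' by (cases "z \<in> A"; cases "z' \<in> A"; simp add: sum_distrib_left[symmetric] had_orth)
    done
  also have "\<dots> = (\<Sum>z\<in>F2vec n. if z \<in> A then \<rho> z z else 0)"
  proof (rule sum.cong[OF refl])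
    fix z assume z: "z \<in> F2vec n"
    have "(\<Sum>z'\<in>F2vec n. if z \<in> A \<and> z' \<in> A then \<rho> z z' * (if z = z' then 1 else 0) else 0)
        = (\<Sum>z'\<in>F2vec n. if z' = z then (if z \<in> A then \<rho> z z else 0) else 0)"
      by (rule sum.cong) auto
    also have "\<dots> = (if z \<in> A then \<rho> z z else 0)" using z by simp
    finally show "(\<Sum>z'\<in>F2vec n. if z \<in> A \<and> z' \<in> A then \<rho> z z' * (if z = z' then 1 else 0) else 0)
        = (if z \<in> A then \<rho> z z else 0)" .
  qed
  also have "\<dots> = (\<Sum>z\<in>F2vec n \<inter> A. \<rho> z z)"
    by (simp add: sum.inter_restrict)
  finally show ?thesis .
qed

lemma rs_UNIV: "rs UNIV f = f" by (simp add: rs_def)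

lemma trace1: "density n \<rho> \<Longrightarrow> (\<Sum>z\<in>F2vec n. \<rho> z z) = 1"
  unfolding density_def mtrace_def by blast

lemma sum_D_X: assumes "density n \<rho>" shows "(\<Sum>x\<in>F2vec n. D_X n \<rho> x) = 1"
proof -
  have "(\<Sum>x\<in>F2vec n. D_X n \<rho> x) = Re (\<Sum>x\<in>F2vec n. qf n \<rho> (rs UNIV (had_vec n x)) (rs UNIV (had_vec n x)))"
    by (simp add: D_X_eq rs_UNIV)
  also have "\<dots> = 1" using assms by (simp add: sum_qf_rs trace1)
  finally show ?thesis .
qed

lemma sum_D_Z: assumes "density n \<rho>" shows "(\<Sum>x\<in>F2vec n. D_Z n \<rho> x) = 1"
  using assms by (simp add: D_Z_eq trace1 flip: Re_sum)

lemma sl_mult_const: "(\<Sum>r\<leftarrow>L. f r) * (c::'a::comm_ring_1) = (\<Sum>r\<leftarrow>L. f r * c)"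
  by (induction L) (simp_all add: algebra_simps)

lemma sl_const_mult: "(c::'a::comm_ring_1) * (\<Sum>r\<leftarrow>L. f r) = (\<Sum>r\<leftarrow>L. c * f r)"
  by (induction L) (simp_all add: algebra_simps)

lemma sl_sum_swap: "(\<Sum>x\<in>S. \<Sum>r\<leftarrow>L. f r x) = (\<Sum>r\<leftarrow>L. \<Sum>x\<in>S. (f r x :: 'a::comm_monoid_add))"
  by (induction L) (simp_all add: sum.distrib)

lemma sl_Re: "Re (\<Sum>r\<leftarrow>L. f r) = (\<Sum>r\<leftarrow>L. Re (f r))"
  by (induction L) simp_all

lemma sl_cong: "(\<And>r. r \<in> set L \<Longrightarrow> f r = g r) \<Longrightarrow> (\<Sum>r\<leftarrow>L. f r) = (\<Sum>r\<leftarrow>L. g r)"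
  by (induction L) simp_all

lemma synd_wt_sl: "real (synd_wt n H x) = (\<Sum>r\<leftarrow>H. if dot n r x then 1 else 0)"
  unfolding synd_wt_def by (induction H) simp_all

definition sgr :: "bool \<Rightarrow> real" where "sgr b = (if b then -1 else 1)"
lemma sgc_sgr: "sgc b = of_real (sgr b)" by (simp add: sgc_def sgr_def)

lemma qf_had: "qf n \<rho> (had_vec n x) (had_vec n x)
   = (\<Sum>z\<in>F2vec n. \<Sum>z'\<in>F2vec n. \<rho> z z' * (had_vec n x z * had_vec n x z'))"
  unfolding qf_def by (rule sum.cong[OF refl], rule sum.cong[OF refl]) (simp add: mult.commute mult.left_commute)

lemma sum_qf_had_sgc:
  assumes "r \<in> F2vec n"
  shows "(\<Sum>x\<in>F2vec n. qf n \<rho> (had_vec n x) (had_vec n x) * sgc (dot n x r)) = (\<Sum>z\<in>F2vec n. \<rho> z (vadd z r))"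
proof -
  have "(\<Sum>x\<in>F2vec n. qf n \<rho> (had_vec n x) (had_vec n x) * sgc (dot n x r))
     = (\<Sum>x\<in>F2vec n. \<Sum>z\<in>F2vec n. \<Sum>z'\<in>F2vec n. \<rho> z z' * (had_vec n x z * had_vec n x z' * sgc (dot n x r)))"
    by (simp add: qf_had sum_distrib_right mult.assoc)
  also have "\<dots> = (\<Sum>z\<in>F2vec n. \<Sum>x\<in>F2vec n. \<Sum>z'\<in>F2vec n. \<rho> z z' * (had_vec n x z * had_vec n x z' * sgc (dot n x r)))"
    by (rule sum.swap)
  also have "\<dots> = (\<Sum>z\<in>F2vec n. \<Sum>z'\<in>F2vec n. \<Sum>x\<in>F2vec n. \<rho> z z' * (had_vec n x z * had_vec n x z' * sgc (dot n x r)))"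
    by (rule sum.cong[OF refl], rule sum.swap)
  also have "\<dots> = (\<Sum>z\<in>F2vec n. \<Sum>z'\<in>F2vec n. \<rho> z z' * (if z' = vadd z r then 1 else 0))"
    apply (rule sum.cong[OF refl], rule sum.cong[OF refl])
    subgoal for z z' using assms by (simp add: sum_distrib_left[symmetric] had_orth_r)
    done
  also have "\<dots> = (\<Sum>z\<in>F2vec n. \<rho> z (vadd z r))"
  proof (rule sum.cong[OF refl])
    fix z assume z: "z \<in> F2vec n"
    have "(\<Sum>z'\<in>F2vec n. \<rho> z z' * (if z' = vadd z r then 1 else 0))
        = (\<Sum>z'\<in>F2vec n. if z' = vadd z r then \<rho> z (vadd z r) else 0)"
      by (rule sum.cong) auto
    also have "\<dots> = \<rho> z (vadd z r)" using z assms by simp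
    finally show "(\<Sum>z'\<in>F2vec n. \<rho> z z' * (if z' = vadd z r then 1 else 0)) = \<rho> z (vadd z r)" .
  qed
  finally show ?thesis .
qed

lemma row_X:
  assumes rF: "r \<in> F2vec n" and rho: "density n \<rho>"
  shows "Re (\<Sum>x\<in>F2vec n. \<Sum>y\<in>F2vec n. (idop x y - Xop r x y) / 2 * \<rho> y x)
       = (\<Sum>x\<in>F2vec n. D_X n \<rho> x * (if dot n r x then 1 else 0))"
proof -
  have a: "(\<Sum>x\<in>F2vec n. \<Sum>y\<in>F2vec n. idop x y * \<rho> y x) = 1"
  proof -
    have "(\<Sum>x\<in>F2vec n. \<Sum>y\<in>F2vec n. idop x y * \<rho> y x) = (\<Sum>x\<in>F2vec n. \<rho> x x)"
    proof (rule sum.cong[OF refl])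
      fix x assume x: "x \<in> F2vec n"
      have "(\<Sum>y\<in>F2vec n. idop x y * \<rho> y x) = (\<Sum>y\<in>F2vec n. if y = x then \<rho> x x else 0)"
        by (rule sum.cong) (auto simp: idop_def)
      then show "(\<Sum>y\<in>F2vec n. idop x y * \<rho> y x) = \<rho> x x" using x by simp
    qed
    then show ?thesis using trace1[OF rho] by simp
  qed
  have b: "(\<Sum>x\<in>F2vec n. \<Sum>y\<in>F2vec n. Xop r x y * \<rho> y x) = (\<Sum>y\<in>F2vec n. \<rho> y (vadd y r))"
  proof -
    have "(\<Sum>x\<in>F2vec n. \<Sum>y\<in>F2vec n. Xop r x y * \<rho> y x) = (\<Sum>y\<in>F2vec n. \<Sum>x\<in>F2vec n. Xop r x y * \<rho> y x)"
      by (rule sum.swap)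
    also have "\<dots> = (\<Sum>y\<in>F2vec n. \<rho> y (vadd y r))"
    proof (rule sum.cong[OF refl])
      fix y assume y: "y \<in> F2vec n"
      have "(\<Sum>x\<in>F2vec n. Xop r x y * \<rho> y x) = (\<Sum>x\<in>F2vec n. if x = vadd y r then \<rho> y (vadd y r) else 0)"
        by (rule sum.cong) (auto simp: Xop_def)
      also have "\<dots> = \<rho> y (vadd y r)" using y rF by simp
      finally show "(\<Sum>x\<in>F2vec n. Xop r x y * \<rho> y x) = \<rho> y (vadd y r)" .
    qed
    finally show ?thesis .
  qed
  have c: "(\<Sum>x\<in>F2vec n. \<Sum>y\<in>F2vec n. (idop x y - Xop r x y) / 2 * \<rho> y x)
     = ((\<Sum>x\<in>F2vec n. \<Sum>y\<in>F2vec n. idop x y * \<rho> y x) - (\<Sum>x\<in>F2vec n. \<Sum>y\<in>F2vec n. Xop r x y * \<rho> y x)) / 2"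
  proof -
    have "(\<Sum>x\<in>F2vec n. \<Sum>y\<in>F2vec n. (idop x y - Xop r x y) / 2 * \<rho> y x)
       = (\<Sum>x\<in>F2vec n. \<Sum>y\<in>F2vec n. (idop x y * \<rho> y x - Xop r x y * \<rho> y x)) / 2"
      by (simp add: sum_divide_distrib left_diff_distrib)
    also have "\<dots> = ((\<Sum>x\<in>F2vec n. \<Sum>y\<in>F2vec n. idop x y * \<rho> y x) - (\<Sum>x\<in>F2vec n. \<Sum>y\<in>F2vec n. Xop r x y * \<rho> y x)) / 2"
      by (simp only: sum_subtractf)
    finally show ?thesis .
  qed
  have d: "(\<Sum>x\<in>F2vec n. D_X n \<rho> x * sgr (dot n x r)) = Re (\<Sum>z\<in>F2vec n. \<rho> z (vadd z r))"
  proof -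
    have "(\<Sum>x\<in>F2vec n. D_X n \<rho> x * sgr (dot n x r))
        = Re (\<Sum>x\<in>F2vec n. qf n \<rho> (had_vec n x) (had_vec n x) * sgc (dot n x r))"
      by (simp add: D_X_eq sgc_sgr Re_sum)
    then show ?thesis using sum_qf_had_sgc[OF rF] by simp
  qed
  have e: "(\<Sum>x\<in>F2vec n. D_X n \<rho> x * (if dot n r x then 1 else 0))
     = ((\<Sum>x\<in>F2vec n. D_X n \<rho> x) - (\<Sum>x\<in>F2vec n. D_X n \<rho> x * sgr (dot n x r))) / 2"
    by (simp add: sum_subtractf[symmetric] sum_divide_distrib dot_sym[of n r] sgr_def)
       (rule sum.cong[OF refl], simp)
  define S where "S = (\<Sum>y\<in>F2vec n. \<rho> y (vadd y r))"
  have f: "(\<Sum>x\<in>F2vec n. \<Sum>y\<in>F2vec n. (idop x y - Xop r x y) / 2 * \<rho> y x) = (1 - S) / 2"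
    using a b c unfolding S_def by simp
  have g: "Re ((1 - S) / 2) = (1 - Re S) / 2" by simp
  show ?thesis unfolding f g using d e sum_D_X[OF rho] unfolding S_def by (simp del: Re_sum)
qed

lemma row_Z:
  assumes rF: "r \<in> F2vec n"
  shows "Re (\<Sum>x\<in>F2vec n. \<Sum>y\<in>F2vec n. (idop x y - Zop n r x y) / 2 * \<rho> y x)
       = (\<Sum>x\<in>F2vec n. D_Z n \<rho> x * (if dot n r x then 1 else 0))"
proof -
  have "(\<Sum>x\<in>F2vec n. \<Sum>y\<in>F2vec n. (idop x y - Zop n r x y) / 2 * \<rho> y x)
      = (\<Sum>x\<in>F2vec n. if dot n r x then \<rho> x x else 0)"
  proof (rule sum.cong[OF refl])
    fix x assume x: "x \<in> F2vec n"
    have "(\<Sum>y\<in>F2vec n. (idop x y - Zop n r x y) / 2 * \<rho> y x)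
        = (\<Sum>y\<in>F2vec n. if y = x then (if dot n r x then \<rho> x x else 0) else 0)"
      by (rule sum.cong) (auto simp: idop_def Zop_def)
    also have "\<dots> = (if dot n r x then \<rho> x x else 0)" using x by simp
    finally show "(\<Sum>y\<in>F2vec n. (idop x y - Zop n r x y) / 2 * \<rho> y x) = (if dot n r x then \<rho> x x else 0)" .
  qed
  then have "Re (\<Sum>x\<in>F2vec n. \<Sum>y\<in>F2vec n. (idop x y - Zop n r x y) / 2 * \<rho> y x)
     = (\<Sum>x\<in>F2vec n. Re (if dot n r x then \<rho> x x else 0))" by (simp add: Re_sum)
  also have "\<dots> = (\<Sum>x\<in>F2vec n. D_Z n \<rho> x * (if dot n r x then 1 else 0))"
    by (rule sum.cong[OF refl]) (simp add: D_Z_eq)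
  finally show ?thesis .
qed

lemma trace_X:
  assumes rows: "set H \<subseteq> F2vec n" and rho: "density n \<rho>"
  shows "Re (\<Sum>x\<in>F2vec n. \<Sum>y\<in>F2vec n. ham_X H x y * \<rho> y x)
      = (\<Sum>x\<in>F2vec n. D_X n \<rho> x * real (synd_wt n H x)) / real (length H)"
proof -
  have "(\<Sum>x\<in>F2vec n. \<Sum>y\<in>F2vec n. ham_X H x y * \<rho> y x)
     = (\<Sum>x\<in>F2vec n. \<Sum>y\<in>F2vec n. (1 / of_nat (length H)) * (\<Sum>r\<leftarrow>H. (idop x y - Xop r x y) / 2 * \<rho> y x))"
    by (simp add: ham_X_def sl_mult_const mult.assoc)
  also have "\<dots> = (1 / of_nat (length H)) * (\<Sum>r\<leftarrow>H. \<Sum>x\<in>F2vec n. \<Sum>y\<in>F2vec n. (idop x y - Xop r x y) / 2 * \<rho> y x)"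
  proof -
    have "(\<Sum>x\<in>F2vec n. \<Sum>y\<in>F2vec n. (1 / of_nat (length H)) * (\<Sum>r\<leftarrow>H. (idop x y - Xop r x y) / 2 * \<rho> y x))
      = (1 / of_nat (length H)) * (\<Sum>x\<in>F2vec n. \<Sum>y\<in>F2vec n. (\<Sum>r\<leftarrow>H. (idop x y - Xop r x y) / 2 * \<rho> y x))"
      by (simp add: sum_distrib_left)
    also have "(\<Sum>x\<in>F2vec n. \<Sum>y\<in>F2vec n. (\<Sum>r\<leftarrow>H. (idop x y - Xop r x y) / 2 * \<rho> y x))
       = (\<Sum>x\<in>F2vec n. \<Sum>r\<leftarrow>H. \<Sum>y\<in>F2vec n. (idop x y - Xop r x y) / 2 * \<rho> y x)"
      by (rule sum.cong[OF refl], rule sl_sum_swap)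
    also have "\<dots> = (\<Sum>r\<leftarrow>H. \<Sum>x\<in>F2vec n. \<Sum>y\<in>F2vec n. (idop x y - Xop r x y) / 2 * \<rho> y x)"
      by (rule sl_sum_swap)
    finally show ?thesis .
  qed
  finally have 1: "(\<Sum>x\<in>F2vec n. \<Sum>y\<in>F2vec n. ham_X H x y * \<rho> y x) = \<dots>" .
  have 2: "Re (\<Sum>r\<leftarrow>H. \<Sum>x\<in>F2vec n. \<Sum>y\<in>F2vec n. (idop x y - Xop r x y) / 2 * \<rho> y x)
     = (\<Sum>r\<leftarrow>H. \<Sum>x\<in>F2vec n. D_X n \<rho> x * (if dot n r x then 1 else 0))"
    unfolding sl_Re by (rule sl_cong) (use rows rho row_X in blast)
  have 3: "(\<Sum>r\<leftarrow>H. \<Sum>x\<in>F2vec n. D_X n \<rho> x * (if dot n r x then 1 else 0))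
      = (\<Sum>x\<in>F2vec n. D_X n \<rho> x * real (synd_wt n H x))"
    by (simp add: synd_wt_sl sl_const_mult sl_sum_swap)
  have 4: "Re (complex_of_real (1 / real (length H)) * w) = Re w / real (length H)" for w
    by simp
  show ?thesis using 1 2 3 4 by (simp add: of_real_def)
qed

lemma trace_Z:
  assumes rows: "set H \<subseteq> F2vec n" and rho: "density n \<rho>"
  shows "Re (\<Sum>x\<in>F2vec n. \<Sum>y\<in>F2vec n. ham_Z n H x y * \<rho> y x)
      = (\<Sum>x\<in>F2vec n. D_Z n \<rho> x * real (synd_wt n H x)) / real (length H)"
proof -
  have "(\<Sum>x\<in>F2vec n. \<Sum>y\<in>F2vec n. ham_Z n H x y * \<rho> y x)
     = (\<Sum>x\<in>F2vec n. \<Sum>y\<in>F2vec n. (1 / of_nat (length H)) * (\<Sum>r\<leftarrow>H. (idop x y - Zop n r x y) / 2 * \<rho> y x))"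
    by (simp add: ham_Z_def sl_mult_const mult.assoc)
  also have "\<dots> = (1 / of_nat (length H)) * (\<Sum>r\<leftarrow>H. \<Sum>x\<in>F2vec n. \<Sum>y\<in>F2vec n. (idop x y - Zop n r x y) / 2 * \<rho> y x)"
  proof -
    have "(\<Sum>x\<in>F2vec n. \<Sum>y\<in>F2vec n. (1 / of_nat (length H)) * (\<Sum>r\<leftarrow>H. (idop x y - Zop n r x y) / 2 * \<rho> y x))
      = (1 / of_nat (length H)) * (\<Sum>x\<in>F2vec n. \<Sum>y\<in>F2vec n. (\<Sum>r\<leftarrow>H. (idop x y - Zop n r x y) / 2 * \<rho> y x))"
      by (simp add: sum_distrib_left)
    also have "(\<Sum>x\<in>F2vec n. \<Sum>y\<in>F2vec n. (\<Sum>r\<leftarrow>H. (idop x y - Zop n r x y) / 2 * \<rho> y x))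
       = (\<Sum>x\<in>F2vec n. \<Sum>r\<leftarrow>H. \<Sum>y\<in>F2vec n. (idop x y - Zop n r x y) / 2 * \<rho> y x)"
      by (rule sum.cong[OF refl], rule sl_sum_swap)
    also have "\<dots> = (\<Sum>r\<leftarrow>H. \<Sum>x\<in>F2vec n. \<Sum>y\<in>F2vec n. (idop x y - Zop n r x y) / 2 * \<rho> y x)"
      by (rule sl_sum_swap)
    finally show ?thesis .
  qed
  finally have 1: "(\<Sum>x\<in>F2vec n. \<Sum>y\<in>F2vec n. ham_Z n H x y * \<rho> y x) = \<dots>" .
  have 2: "Re (\<Sum>r\<leftarrow>H. \<Sum>x\<in>F2vec n. \<Sum>y\<in>F2vec n. (idop x y - Zop n r x y) / 2 * \<rho> y x)
     = (\<Sum>r\<leftarrow>H. \<Sum>x\<in>F2vec n. D_Z n \<rho> x * (if dot n r x then 1 else 0))"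
    unfolding sl_Re by (rule sl_cong) (use rows row_Z in blast)
  have 3: "(\<Sum>r\<leftarrow>H. \<Sum>x\<in>F2vec n. D_Z n \<rho> x * (if dot n r x then 1 else 0))
      = (\<Sum>x\<in>F2vec n. D_Z n \<rho> x * real (synd_wt n H x))"
    by (simp add: synd_wt_sl sl_const_mult sl_sum_swap)
  have 4: "Re (complex_of_real (1 / real (length H)) * w) = Re w / real (length H)" for w
    by simp
  show ?thesis using 1 2 3 4 by (simp add: of_real_def)
qed

lemma energy_split:
  "Re (mtrace n (mmul n (code_ham n HX HZ) \<rho>))
    = (Re (\<Sum>x\<in>F2vec n. \<Sum>y\<in>F2vec n. ham_X HX x y * \<rho> y x)
      + Re (\<Sum>x\<in>F2vec n. \<Sum>y\<in>F2vec n. ham_Z n HZ x y * \<rho> y x)) / 2"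
proof -
  have "mtrace n (mmul n (code_ham n HX HZ) \<rho>)
     = (\<Sum>x\<in>F2vec n. \<Sum>y\<in>F2vec n. (ham_X HX x y * \<rho> y x + ham_Z n HZ x y * \<rho> y x) / 2)"
    by (simp add: mtrace_def mmul_def code_ham_def algebra_simps)
  also have "\<dots> = ((\<Sum>x\<in>F2vec n. \<Sum>y\<in>F2vec n. ham_X HX x y * \<rho> y x)
      + (\<Sum>x\<in>F2vec n. \<Sum>y\<in>F2vec n. ham_Z n HZ x y * \<rho> y x)) / 2"
    by (simp add: sum_divide_distrib[symmetric] sum.distrib)
  finally have eq: "mtrace n (mmul n (code_ham n HX HZ) \<rho>) = ((\<Sum>x\<in>F2vec n. \<Sum>y\<in>F2vec n. ham_X HX x y * \<rho> y x)
      + (\<Sum>x\<in>F2vec n. \<Sum>y\<in>F2vec n. ham_Z n HZ x y * \<rho> y x)) / 2" .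
  have h: "\<And>A B::complex. Re ((A + B)/2) = (Re A + Re B)/2" by simp
  show ?thesis by (subst eq, rule h)
qed

lemma hw_zv[simp]: "hw n zv = 0" by (simp add: hw_def zv_def)

lemma hw_vadd_le: "hw n (vadd a b) \<le> hw n a + hw n b"
proof -
  have "{i. i < n \<and> vadd a b i} \<subseteq> {i. i < n \<and> a i} \<union> {i. i < n \<and> b i}"
    by (auto simp: vadd_def)
  then have "card {i. i < n \<and> vadd a b i} \<le> card ({i. i < n \<and> a i} \<union> {i. i < n \<and> b i})"
    by (rule card_mono[rotated]) auto
  also have "\<dots> \<le> card {i. i < n \<and> a i} + card {i. i < n \<and> b i}" by (rule card_Un_le)
  finally show ?thesis by (simp add: hw_def)
qed

lemma hw_pos: "y \<in> F2vec n \<Longrightarrow> y \<noteq> zv \<Longrightarrow> 0 < hw n y"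
proof -
  assume y: "y \<in> F2vec n" "y \<noteq> zv"
  then obtain i where i: "y i" by (auto simp: zv_def)
  with y have "i < n" by (meson F2vec_iff not_le)
  then have "i \<in> {i. i < n \<and> y i}" using i by simp
  then have "{i. i < n \<and> y i} \<noteq> {}" by blast
  then show ?thesis by (simp add: hw_def card_gt_0_iff)
qed

lemma perp_sub: "perp n K \<subseteq> F2vec n" by (auto simp: perp_def)
lemma zv_perp[simp]: "zv \<in> perp n K" by (simp add: perp_def)
lemma perp_vadd: "a \<in> perp n K \<Longrightarrow> b \<in> perp n K \<Longrightarrow> vadd a b \<in> perp n K"
  by (auto simp: perp_def dot_vadd_left)
lemma finite_perp[simp]: "finite (perp n K)" by (rule finite_subset[OF perp_sub]) simp

lemma kerH_sub: "kerH n H \<subseteq> F2vec n" by (auto simp: kerH_def)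
lemma kerH_vadd: "a \<in> kerH n H \<Longrightarrow> b \<in> kerH n H \<Longrightarrow> vadd a b \<in> kerH n H"
  by (auto simp: kerH_def dot_vadd_right)

lemma cw_le: "c \<in> perp n K \<Longrightarrow> coset_wt n (perp n K) y \<le> hw n (vadd y c)"
  unfolding coset_wt_def by (rule Min_le) auto

lemma cw_ex: "\<exists>c\<in>perp n K. coset_wt n (perp n K) y = hw n (vadd y c)"
proof -
  have "coset_wt n (perp n K) y \<in> (\<lambda>y'. hw n (vadd y y')) ` perp n K"
    unfolding coset_wt_def
  proof (rule Min_in)
    show "(\<lambda>y'. hw n (vadd y y')) ` perp n K \<noteq> {}" using zv_perp by blast
  qed simp
  then show ?thesis by auto
qed

lemma cw_le_hw: "coset_wt n (perp n K) y \<le> hw n y"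
  using cw_le[OF zv_perp, of n K y] by simp

lemma cw_zero: "c \<in> perp n K \<Longrightarrow> coset_wt n (perp n K) c = 0"
  using cw_le[of c n K c] by simp

lemma cw_sub: "coset_wt n (perp n K) (vadd a b) \<le> coset_wt n (perp n K) a + coset_wt n (perp n K) b"
proof -
  obtain c1 where c1: "c1 \<in> perp n K" "coset_wt n (perp n K) a = hw n (vadd a c1)" using cw_ex by blast
  obtain c2 where c2: "c2 \<in> perp n K" "coset_wt n (perp n K) b = hw n (vadd b c2)" using cw_ex by blast
  have "coset_wt n (perp n K) (vadd a b) \<le> hw n (vadd (vadd a b) (vadd c1 c2))"
    by (rule cw_le) (use c1 c2 perp_vadd in auto)
  also have "vadd (vadd a b) (vadd c1 c2) = vadd (vadd a c1) (vadd b c2)"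
    by (auto simp: vadd_def fun_eq_iff)
  also have "hw n \<dots> \<le> hw n (vadd a c1) + hw n (vadd b c2)" by (rule hw_vadd_le)
  finally show ?thesis using c1 c2 by simp
qed

lemma synd_wt_vadd_le: "synd_wt n H (vadd a b) \<le> synd_wt n H a + synd_wt n H b"
  unfolding synd_wt_def by (induction H) (auto simp: dot_vadd_right)

lemma synd_wt_vadd_ker: "c \<in> kerH n H \<Longrightarrow> synd_wt n H (vadd a c) = synd_wt n H a"
  unfolding synd_wt_def kerH_def
  by (rule arg_cong[where f=length], rule filter_cong) (auto simp: dot_vadd_right)

lemma G_sub: "G_eps n H e \<subseteq> F2vec n" by (auto simp: G_eps_def)

lemma G_add: "a \<in> G_eps n H e \<Longrightarrow> b \<in> G_eps n H e \<Longrightarrow> vadd a b \<in> G_eps n H (2*e)"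
proof -
  assume a: "a \<in> G_eps n H e" and b: "b \<in> G_eps n H e"
  have "real (synd_wt n H (vadd a b)) \<le> real (synd_wt n H a) + real (synd_wt n H b)"
    using synd_wt_vadd_le[of n H a b] by linarith
  also have "\<dots> \<le> 2 * e * real (length H)" using a b by (simp add: G_eps_def)
  finally show ?thesis using a b by (simp add: G_eps_def)
qed

lemma G_ker: assumes "a \<in> G_eps n H e" "c \<in> kerH n H" shows "vadd a c \<in> G_eps n H e"
proof -
  have "c \<in> F2vec n" using assms(2) kerH_sub by blast
  then show ?thesis using assms by (auto simp: G_eps_def synd_wt_vadd_ker)
qed

locale clus =
  fixes n :: nat and H1 H2 :: "(nat \<Rightarrow> bool) list" and c1 c2 e d :: real
  assumes rows1: "set H1 \<subseteq> F2vec n" and rows2: "set H2 \<subseteq> F2vec n"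
    and orth: "\<And>a b. a \<in> set H1 \<Longrightarrow> b \<in> set H2 \<Longrightarrow> \<not> dot n a b"
    and clus2: "\<And>y. y \<in> G_eps n H1 (2*e) \<Longrightarrow>
        real (coset_wt n (perp n (kerH n H2)) y) \<le> c1 * (2*e) * real n
      \<or> real (coset_wt n (perp n (kerH n H2)) y) \<ge> c2 * real n"
    and epos: "e > 0" and c1pos: "c1 > 0"
    and small: "4 * c1 * e * real n < c2 * real n"
    and dist: "2 * c1 * e * real n < d"
    and dhyp: "\<And>y. y \<in> kerH n H1 - perp n (kerH n H2) \<Longrightarrow> d \<le> real (hw n y)"
begin

abbreviation "C \<equiv> perp n (kerH n H2)"
abbreviation "cw \<equiv> coset_wt n C"
abbreviation "G \<equiv> G_eps n H1 e"
definition "R a b \<longleftrightarrow> real (cw (vadd a b)) \<le> c1 * (2*e) * real n"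

lemma C_sub_ker1: "C \<subseteq> kerH n H1"
proof
  fix c assume c: "c \<in> C"
  have "\<not> dot n r c" if r: "r \<in> set H1" for r
  proof -
    have "r \<in> kerH n H2" using r rows1 orth dot_sym unfolding kerH_def by blast
    then show ?thesis using c dot_sym unfolding perp_def by blast
  qed
  then show "c \<in> kerH n H1" using c perp_sub unfolding kerH_def by blast
qed

lemma rows2_C: "r \<in> set H2 \<Longrightarrow> r \<in> C"
  using rows2 unfolding perp_def kerH_def by blast

lemma R_refl: "R a a"
  using c1pos epos by (simp add: R_def cw_zero)

lemma R_sym: "R a b \<Longrightarrow> R b a"
  by (simp add: R_def vadd_comm)

lemma R_trans: assumes "a \<in> G" "b \<in> G" "c \<in> G" "R a b" "R b c" shows "R a c"
proof -
  have v: "vadd a c = vadd (vadd a b) (vadd b c)" by (auto simp: vadd_def fun_eq_iff)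
  have "cw (vadd a c) \<le> cw (vadd a b) + cw (vadd b c)"
    unfolding v by (rule cw_sub)
  then have "real (cw (vadd a c)) \<le> real (cw (vadd a b)) + real (cw (vadd b c))"
    by linarith
  also have "\<dots> \<le> 4 * c1 * e * real n" using assms(4,5) by (simp add: R_def)
  finally have "real (cw (vadd a c)) < c2 * real n" using small by linarith
  moreover have "vadd a c \<in> G_eps n H1 (2*e)" using G_add assms by blast
  ultimately show ?thesis using clus2[of "vadd a c"] unfolding R_def by linarith
qed

lemma sep: assumes "a \<in> G" "b \<in> G" "\<not> R a b" shows "c2 * real n \<le> real (hw n (vadd a b))"
proof -
  have "vadd a b \<in> G_eps n H1 (2*e)" using G_add assms by blast
  then have "c2 * real n \<le> real (cw (vadd a b))" using clus2[of "vadd a b"] assms(3) unfolding R_def by linarith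
  also have "\<dots> \<le> real (hw n (vadd a b))" using cw_le_hw by simp
  finally show ?thesis .
qed

lemma row_shift: assumes "x \<in> G" "r \<in> set H2" shows "vadd x r \<in> G" "R x (vadd x r)"
proof -
  show "vadd x r \<in> G" using G_ker assms rows2_C C_sub_ker1 by blast
  have "vadd x (vadd x r) = r" by (auto simp: vadd_def fun_eq_iff)
  then show "R x (vadd x r)" using rows2_C[OF assms(2)] c1pos epos by (simp add: R_def cw_zero)
qed

lemma cw_ge_d: assumes "v \<in> kerH n H1" "v \<notin> C" shows "d \<le> real (cw v)"
proof -
  obtain c where c: "c \<in> C" "cw v = hw n (vadd v c)" using cw_ex by blast
  have "vadd v c \<in> kerH n H1" using kerH_vadd assms(1) c(1) C_sub_ker1 by blast
  moreover have "vadd v c \<notin> C"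
  proof
    assume "vadd v c \<in> C"
    then have "vadd (vadd v c) c \<in> C" using perp_vadd c(1) by blast
    then show False using assms(2) by simp
  qed
  ultimately show ?thesis using dhyp c(2) by simp
qed

lemma v_shift: assumes "v \<in> kerH n H1" "v \<notin> C" "x \<in> G"
  shows "vadd x v \<in> G" "\<not> R x (vadd x v)"
proof -
  show "vadd x v \<in> G" using G_ker assms by blast
  have "vadd x (vadd x v) = v" by (auto simp: vadd_def fun_eq_iff)
  then show "\<not> R x (vadd x v)" using cw_ge_d[OF assms(1,2)] dist by (simp add: R_def)
qed

lemma ker_class: assumes "R a b" "vadd a b \<in> kerH n H1" shows "vadd a b \<in> C"
proof (rule ccontr)
  assume "vadd a b \<notin> C"
  then have "d \<le> real (cw (vadd a b))" using cw_ge_d assms(2) by blast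
  then show False using assms(1) dist unfolding R_def by linarith
qed

end

lemma greedy_aux:
  fixes D :: "'a \<Rightarrow> real"
  assumes fin: "finite G" and tot: "\<mu> \<le> sum D G"
    and sym: "\<And>x y. x \<in> G \<Longrightarrow> y \<in> G \<Longrightarrow> R x y \<Longrightarrow> R y x"
    and trans: "\<And>x y z. x \<in> G \<Longrightarrow> y \<in> G \<Longrightarrow> z \<in> G \<Longrightarrow> R x y \<Longrightarrow> R y z \<Longrightarrow> R x z"
    and refl: "\<And>x. x \<in> G \<Longrightarrow> R x x"
    and ns: "\<And>U. U \<subseteq> G \<Longrightarrow> (\<forall>x\<in>U. \<forall>y\<in>G. R x y \<longrightarrow> y \<in> U) \<Longrightarrow> sum D U < \<mu> \<or> sum D (G - U) < \<mu>"
  shows "U \<subseteq> G \<Longrightarrow> (\<forall>x\<in>U. \<forall>y\<in>G. R x y \<longrightarrow> y \<in> U) \<Longrightarrow> sum D U < \<mu>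
     \<Longrightarrow> \<exists>a\<in>G. sum D {b\<in>G. R a b} > sum D G - 2 * \<mu>"
proof (induction "card (G - U)" arbitrary: U rule: less_induct)
  case less
  have "G - U \<noteq> {}"
  proof
    assume "G - U = {}"
    then have "U = G" using less.prems(1) by blast
    then show False using less.prems(3) tot by simp
  qed
  then obtain x where x: "x \<in> G" "x \<notin> U" by blast
  define K where "K = {b\<in>G. R x b}"
  have KG: "K \<subseteq> G" by (auto simp: K_def)
  have xK: "x \<in> K" using x refl by (simp add: K_def)
  have disj: "U \<inter> K = {}"
  proof (rule ccontr)
    assume "U \<inter> K \<noteq> {}"
    then obtain b where b: "b \<in> U" "b \<in> K" by blast
    then have "R b x" using sym x KG by (auto simp: K_def)
    then show False using less.prems(2) b(1) x by blast
  qed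
  have closed: "\<forall>w\<in>U \<union> K. \<forall>y\<in>G. R w y \<longrightarrow> y \<in> U \<union> K"
  proof (intro ballI impI)
    fix w y assume w: "w \<in> U \<union> K" and y: "y \<in> G" and r: "R w y"
    show "y \<in> U \<union> K"
    proof (cases "w \<in> U")
      case True then show ?thesis using less.prems(2) y r by blast
    next
      case False
      then have "w \<in> K" using w by blast
      then have "R x y" using trans[of x w y] x y r KG by (auto simp: K_def)
      then show ?thesis using y by (simp add: K_def)
    qed
  qed
  have finU: "finite U" using less.prems(1) fin finite_subset by blast
  have finK: "finite K" using KG fin finite_subset by blast
  have sUK: "sum D (U \<union> K) = sum D U + sum D K"
    using finU finK disj by (simp add: sum.union_disjoint)
  show ?case
  proof (cases "sum D (U \<union> K) < \<mu>")
    case True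
    have "G - (U \<union> K) \<subset> G - U" using x xK by blast
    then have "card (G - (U \<union> K)) < card (G - U)"
      by (rule psubset_card_mono[rotated]) (use fin in simp)
    moreover have "U \<union> K \<subseteq> G" using less.prems(1) KG by blast
    ultimately show ?thesis using less.hyps closed True by blast
  next
    case False
    have UKG: "U \<union> K \<subseteq> G" using less.prems(1) KG by blast
    then have "sum D (G - (U \<union> K)) < \<mu>" using ns[OF UKG closed] False by linarith
    moreover have "sum D G = sum D (U \<union> K) + sum D (G - (U \<union> K))"
      using UKG fin by (metis add.commute sum.subset_diff)
    ultimately have "sum D K > sum D G - 2 * \<mu>" using sUK less.prems(3) by linarith
    then show ?thesis using x(1) by (auto simp: K_def)
  qed
qed

lemma greedy:
  fixes D :: "'a \<Rightarrow> real"
  assumes fin: "finite G" and mu: "0 < \<mu>" and tot: "\<mu> \<le> sum D G"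
    and sym: "\<And>x y. x \<in> G \<Longrightarrow> y \<in> G \<Longrightarrow> R x y \<Longrightarrow> R y x"
    and trans: "\<And>x y z. x \<in> G \<Longrightarrow> y \<in> G \<Longrightarrow> z \<in> G \<Longrightarrow> R x y \<Longrightarrow> R y z \<Longrightarrow> R x z"
    and refl: "\<And>x. x \<in> G \<Longrightarrow> R x x"
    and ns: "\<And>U. U \<subseteq> G \<Longrightarrow> (\<forall>x\<in>U. \<forall>y\<in>G. R x y \<longrightarrow> y \<in> U) \<Longrightarrow> sum D U < \<mu> \<or> sum D (G - U) < \<mu>"
  shows "\<exists>a\<in>G. sum D {b\<in>G. R a b} > sum D G - 2 * \<mu>"
proof -
  note g = greedy_aux[OF fin tot sym trans refl ns]
  show ?thesis by (rule g[where U="{}"]) (use mu in auto)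
qed

lemma shift_inv:
  assumes BF: "B \<subseteq> F2vec n" and vF: "v \<in> F2vec n" and rows: "set H \<subseteq> F2vec n"
    and Binv: "\<And>x r. x \<in> B \<Longrightarrow> r \<in> set H \<Longrightarrow> vadd x r \<in> B"
    and Aprop: "\<And>z z'. z \<in> A \<Longrightarrow> z' \<in> A \<Longrightarrow> vadd z z' \<in> kerH n H \<Longrightarrow> \<not> dot n v (vadd z z')"
  shows "(\<Sum>x\<in>B. qf n \<rho> (rs A (had_vec n (vadd x v))) (rs A (had_vec n (vadd x v))))
       = (\<Sum>x\<in>B. qf n \<rho> (rs A (had_vec n x)) (rs A (had_vec n x)))"
proof -
  have key: "(\<Sum>x\<in>B. sgc (dot n (vadd x v) (vadd z z'))) = (\<Sum>x\<in>B. sgc (dot n x (vadd z z')))"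
    if zA: "z \<in> A" "z' \<in> A" and zF: "z \<in> F2vec n" "z' \<in> F2vec n" for z z'
  proof (cases "vadd z z' \<in> kerH n H")
    case True
    then have "\<not> dot n v (vadd z z')" using Aprop zA by blast
    then show ?thesis by (simp add: dot_vadd_left)
  next
    case False
    then obtain r where r: "r \<in> set H" "dot n r (vadd z z')"
      using zF unfolding kerH_def by auto
    have 0: "(\<Sum>x\<in>B. sgc (dot n x (vadd z z'))) = 0"
      by (rule char_sum_shift[OF _ r(2)]) (use Binv r(1) in blast)
    have "(\<Sum>x\<in>B. sgc (dot n (vadd x v) (vadd z z'))) = (\<Sum>x\<in>B. sgc (dot n x (vadd z z')) * sgc (dot n v (vadd z z')))"
      by (rule sum.cong[OF refl]) (simp add: dot_vadd_left sgc_def)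
    also have "\<dots> = (\<Sum>x\<in>B. sgc (dot n x (vadd z z'))) * sgc (dot n v (vadd z z'))"
      by (simp add: sum_distrib_right)
    finally have "(\<Sum>x\<in>B. sgc (dot n (vadd x v) (vadd z z'))) = (\<Sum>x\<in>B. sgc (dot n x (vadd z z'))) * sgc (dot n v (vadd z z'))" .
    then show ?thesis using 0 by simp
  qed
  have expand: "(\<Sum>x\<in>B. qf n \<rho> (rs A (had_vec n (f x))) (rs A (had_vec n (f x))))
     = (\<Sum>z\<in>F2vec n. \<Sum>z'\<in>F2vec n. if z \<in> A \<and> z' \<in> A then \<rho> z z' * ((\<Sum>x\<in>B. sgc (dot n (f x) (vadd z z'))) / 2 ^ n) else 0)"
    for f :: "(nat \<Rightarrow> bool) \<Rightarrow> (nat \<Rightarrow> bool)"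
  proof -
    have "(\<Sum>x\<in>B. qf n \<rho> (rs A (had_vec n (f x))) (rs A (had_vec n (f x))))
      = (\<Sum>x\<in>B. \<Sum>z\<in>F2vec n. \<Sum>z'\<in>F2vec n. if z \<in> A \<and> z' \<in> A then \<rho> z z' * (sgc (dot n (f x) (vadd z z')) / 2 ^ n) else 0)"
      unfolding qf_rs_had by (intro sum.cong refl) (simp add: had_mult)
    also have "\<dots> = (\<Sum>z\<in>F2vec n. \<Sum>x\<in>B. \<Sum>z'\<in>F2vec n. if z \<in> A \<and> z' \<in> A then \<rho> z z' * (sgc (dot n (f x) (vadd z z')) / 2 ^ n) else 0)"
      by (rule sum.swap)
    also have "\<dots> = (\<Sum>z\<in>F2vec n. \<Sum>z'\<in>F2vec n. \<Sum>x\<in>B. if z \<in> A \<and> z' \<in> A then \<rho> z z' * (sgc (dot n (f x) (vadd z z')) / 2 ^ n) else 0)"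
      by (rule sum.cong[OF refl], rule sum.swap)
    also have "\<dots> = (\<Sum>z\<in>F2vec n. \<Sum>z'\<in>F2vec n. if z \<in> A \<and> z' \<in> A then \<rho> z z' * ((\<Sum>x\<in>B. sgc (dot n (f x) (vadd z z'))) / 2 ^ n) else 0)"
      apply (rule sum.cong[OF refl], rule sum.cong[OF refl])
      subgoal for z z' by (cases "z \<in> A"; cases "z' \<in> A"; simp add: sum_distrib_left sum_divide_distrib)
      done
    finally show ?thesis .
  qed
  show ?thesis
    unfolding expand[of "\<lambda>x. vadd x v"] expand[of "\<lambda>x. x"]
    apply (rule sum.cong[OF refl], rule sum.cong[OF refl])
    subgoal for z z' using key[of z z'] by (cases "z \<in> A"; cases "z' \<in> A"; simp)
    done
qed


lemma markov_gen:
  fixes D s :: "'a \<Rightarrow> real"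
  assumes "finite S" "\<And>x. x \<in> S \<Longrightarrow> 0 \<le> D x" "\<And>x. x \<in> S \<Longrightarrow> 0 \<le> s x"
    "\<And>x. x \<in> S - T \<Longrightarrow> t < s x"
  shows "t * sum D (S - T) \<le> (\<Sum>x\<in>S. D x * s x)"
proof -
  have "t * sum D (S - T) = (\<Sum>x\<in>S - T. D x * t)" by (simp add: sum_distrib_left mult.commute)
  also have "\<dots> \<le> (\<Sum>x\<in>S - T. D x * s x)"
  proof (rule sum_mono)
    fix x assume x: "x \<in> S - T"
    then have "t \<le> s x" using assms(4) less_imp_le by blast
    moreover have "0 \<le> D x" using x assms(2) by blast
    ultimately show "D x * t \<le> D x * s x" by (rule mult_left_mono)
  qed
  also have "\<dots> \<le> (\<Sum>x\<in>S. D x * s x)"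
    by (rule sum_mono2) (use assms in auto)
  finally show ?thesis .
qed

lemma rs_sum: "(\<lambda>z. rs A f z + rs (- A) f z) = f"
  by (auto simp: rs_def fun_eq_iff)

lemma quantum_core:
  assumes rho: "density n \<rho>" and BF: "B \<subseteq> F2vec n" and vF: "v \<in> F2vec n" and rows: "set H \<subseteq> F2vec n"
    and Binv: "\<And>x r. x \<in> B \<Longrightarrow> r \<in> set H \<Longrightarrow> vadd x r \<in> B"
    and Aprop: "\<And>z z'. z \<in> A \<Longrightarrow> z' \<in> A \<Longrightarrow> vadd z z' \<in> kerH n H \<Longrightarrow> \<not> dot n v (vadd z z')"
  shows "(\<Sum>x\<in>B. D_X n \<rho> (vadd x v)) \<ge> 3/5 * (\<Sum>x\<in>B. D_X n \<rho> x) - 6 * (\<Sum>z\<in>F2vec n - A. D_Z n \<rho> z)"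
proof -
  define P where "P y = Re (qf n \<rho> (rs A (had_vec n y)) (rs A (had_vec n y)))" for y
  define Q where "Q y = Re (qf n \<rho> (rs (- A) (had_vec n y)) (rs (- A) (had_vec n y)))" for y
  define \<eta> where "\<eta> = (\<Sum>z\<in>F2vec n - A. D_Z n \<rho> z)"
  have up: "D_X n \<rho> y \<le> 5/4 * P y + 5 * Q y" for y
    unfolding P_def Q_def using split_bounds(1)[OF rho, of "rs A (had_vec n y)" "rs (- A) (had_vec n y)"]
    by (simp only: D_X_eq rs_sum)
  have lo: "D_X n \<rho> y \<ge> 3/4 * P y - 3 * Q y" for y
    unfolding P_def Q_def using split_bounds(2)[OF rho, of "rs A (had_vec n y)" "rs (- A) (had_vec n y)"]
    by (simp only: D_X_eq rs_sum)
  have Qnn: "0 \<le> Q y" for y unfolding Q_def by (rule density_psd[OF rho])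
  have sumQ: "(\<Sum>y\<in>F2vec n. Q y) = \<eta>"
  proof -
    have "(\<Sum>y\<in>F2vec n. Q y) = Re (\<Sum>z\<in>F2vec n \<inter> - A. \<rho> z z)"
      unfolding Q_def by (simp add: sum_qf_rs flip: Re_sum)
    also have "F2vec n \<inter> - A = F2vec n - A" by blast
    also have "Re (\<Sum>z\<in>F2vec n - A. \<rho> z z) = \<eta>"
      unfolding \<eta>_def by (simp add: Re_sum D_Z_eq)
    finally show ?thesis .
  qed
  have QB: "(\<Sum>x\<in>B. Q x) \<le> \<eta>"
    unfolding sumQ[symmetric] by (rule sum_mono2) (use BF Qnn in auto)
  have injv: "inj_on (\<lambda>x. vadd x v) B"
    by (rule inj_onI) (metis vadd_cancel(1))
  have QBv: "(\<Sum>x\<in>B. Q (vadd x v)) \<le> \<eta>"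
  proof -
    have "(\<Sum>x\<in>B. Q (vadd x v)) = (\<Sum>y\<in>(\<lambda>x. vadd x v) ` B. Q y)"
      by (simp add: sum.reindex[OF injv])
    also have "\<dots> \<le> (\<Sum>y\<in>F2vec n. Q y)"
      by (rule sum_mono2) (use BF vF Qnn in auto)
    finally show ?thesis using sumQ by simp
  qed
  have PB: "(\<Sum>x\<in>B. P (vadd x v)) = (\<Sum>x\<in>B. P x)"
    unfolding P_def using shift_inv[OF BF vF rows Binv Aprop, where \<rho>=\<rho>] by (simp flip: Re_sum)
  have s1: "(\<Sum>x\<in>B. D_X n \<rho> (vadd x v)) \<ge> 3/4 * (\<Sum>x\<in>B. P (vadd x v)) - 3 * (\<Sum>x\<in>B. Q (vadd x v))"
  proof -
    have "(\<Sum>x\<in>B. 3/4 * P (vadd x v) - 3 * Q (vadd x v)) \<le> (\<Sum>x\<in>B. D_X n \<rho> (vadd x v))"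
      by (rule sum_mono) (rule lo)
    then show ?thesis by (simp add: sum_subtractf sum_distrib_left)
  qed
  have s2: "(\<Sum>x\<in>B. D_X n \<rho> x) \<le> 5/4 * (\<Sum>x\<in>B. P x) + 5 * (\<Sum>x\<in>B. Q x)"
  proof -
    have "(\<Sum>x\<in>B. D_X n \<rho> x) \<le> (\<Sum>x\<in>B. 5/4 * P x + 5 * Q x)"
      by (rule sum_mono) (rule up)
    then show ?thesis by (simp add: sum.distrib sum_distrib_left)
  qed
  show ?thesis using s1 s2 PB QB QBv unfolding \<eta>_def[symmetric] by linarith
qed

context clus
begin

lemma dominant:
  fixes D :: "(nat \<Rightarrow> bool) \<Rightarrow> real"
  assumes nn: "\<And>x. 0 \<le> D x" and tot: "sum D (F2vec n) = 1"
    and out: "sum D (F2vec n - G) < 0.004" and ns: "\<not> spread n D 0.02 c2"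
  shows "\<exists>a\<in>G. sum D {b\<in>G. R a b} > 0.956"
proof -
  have GF: "G \<subseteq> F2vec n" by (rule G_sub)
  have finG: "finite G" by (rule finite_subset[OF GF]) simp
  have sG: "sum D G > 0.996"
  proof -
    have "sum D (F2vec n) = sum D (F2vec n - G) + sum D G"
      by (rule sum.subset_diff[OF GF finite_F2vec])
    then show ?thesis using tot out by simp
  qed
  have nsU: "sum D U < 0.02 \<or> sum D (G - U) < 0.02"
    if U: "U \<subseteq> G" "\<forall>x\<in>U. \<forall>y\<in>G. R x y \<longrightarrow> y \<in> U" for U
  proof (rule ccontr)
    assume "\<not> (sum D U < 0.02 \<or> sum D (G - U) < 0.02)"
    then have a: "sum D U \<ge> 0.02" "sum D (G - U) \<ge> 0.02" by auto
    have ne1: "U \<noteq> {}" using a(1) by auto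
    have ne2: "G - U \<noteq> {}"
    proof
      assume e: "G - U = {}"
      have "sum D (G - U) = 0" by (simp only: e sum.empty)
      then show False using a(2) by simp
    qed
    have sp: "\<forall>s\<in>U. \<forall>t\<in>G - U. c2 * real n \<le> real (hw n (vadd s t))"
    proof (intro ballI)
      fix s t assume s: "s \<in> U" and t: "t \<in> G - U"
      then have "\<not> R s t" using U by blast
      then show "c2 * real n \<le> real (hw n (vadd s t))" using sep s t U by blast
    qed
    have s1: "U \<subseteq> F2vec n" "G - U \<subseteq> F2vec n" using U GF by auto
    have "spread n D 0.02 c2"
      unfolding spread_def
      apply (rule exI[of _ U], rule exI[of _ "G - U"])
      apply (intro conjI)
      using s1 a ne1 ne2 sp by simp_all
    then show False using ns by blast
  qed
  have "\<exists>a\<in>G. sum D {b\<in>G. R a b} > sum D G - 2 * 0.02"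
  proof (rule greedy[OF finG])
    show "0 < (0.02::real)" by simp
    show "0.02 \<le> sum D G" using sG by simp
    show "\<And>x y. x \<in> G \<Longrightarrow> y \<in> G \<Longrightarrow> R x y \<Longrightarrow> R y x" using R_sym by blast
    show "\<And>x y z. x \<in> G \<Longrightarrow> y \<in> G \<Longrightarrow> z \<in> G \<Longrightarrow> R x y \<Longrightarrow> R y z \<Longrightarrow> R x z" using R_trans by blast
    show "\<And>x. x \<in> G \<Longrightarrow> R x x" using R_refl by blast
    show "\<And>U. U \<subseteq> G \<Longrightarrow> \<forall>x\<in>U. \<forall>y\<in>G. R x y \<longrightarrow> y \<in> U \<Longrightarrow> sum D U < 0.02 \<or> sum D (G - U) < 0.02"
      using nsU by blast
  qed
  then obtain a where "a \<in> G" "sum D {b\<in>G. R a b} > sum D G - 2 * 0.02" by blast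
  then show ?thesis using sG by (intro bexI[of _ a]) simp_all
qed

end

theorem theorem4p7:
  fixes n :: nat and HX HZ :: "(nat \<Rightarrow> bool) list"
    and c1 c2 \<epsilon>0 \<epsilon> :: real and \<rho> :: qop
  assumes rowsX: "set HX \<subseteq> F2vec n" and rowsZ: "set HZ \<subseteq> F2vec n"
    and mX: "HX \<noteq> []" and mZ: "HZ \<noteq> []"
    and css: "perp n (kerH n HX) \<subseteq> kerH n HZ"
    and kpos: "css_k n HX HZ > 0"
    and cpos: "c1 > 0" "c2 > 0" "\<epsilon>0 > 0"
    and clus: "clustering n HX HZ c1 c2 \<epsilon>0"
    and eps: "\<epsilon> < 1/1000 * min (\<epsilon>0 / 2) (min (c2 / (4 * c1)) (real (css_d n HX HZ) / (2 * c1 * real n)))"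
    and rho: "density n \<rho>"
    and energy: "Re (mtrace n (mmul n (code_ham n HX HZ) \<rho>)) \<le> \<epsilon>"
  shows "spread n (D_X n \<rho>) 0.02 c2 \<or> spread n (D_Z n \<rho>) 0.02 c2"
proof (rule ccontr)
  assume nsp: "\<not> (spread n (D_X n \<rho>) 0.02 c2 \<or> spread n (D_Z n \<rho>) 0.02 c2)"
  then have nsX: "\<not> spread n (D_X n \<rho>) 0.02 c2" and nsZ: "\<not> spread n (D_Z n \<rho>) 0.02 c2" by auto
  have orthXZ: "\<not> dot n a b" if a: "a \<in> set HX" and b: "b \<in> set HZ" for a b
  proof -
    have "a \<in> perp n (kerH n HX)" using a rowsX unfolding perp_def kerH_def by blast
    then have "a \<in> kerH n HZ" using css by blast
    then show ?thesis using b dot_sym unfolding kerH_def by blast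
  qed
  have orthZX: "\<not> dot n a b" if "a \<in> set HZ" "b \<in> set HX" for a b
    using orthXZ[OF that(2,1)] dot_sym by blast
  obtain u where u: "u \<in> kerH n HZ" "u \<notin> perp n (kerH n HX)"
  proof -
    have "\<not> kerH n HZ \<subseteq> perp n (kerH n HX)"
    proof
      assume "kerH n HZ \<subseteq> perp n (kerH n HX)"
      then have "kerH n HZ = perp n (kerH n HX)" using css by blast
      then have "css_k n HX HZ = 0" by (simp add: css_k_def)
      then show False using kpos by simp
    qed
    then show ?thesis using that by blast
  qed
  have uF: "u \<in> F2vec n" using u(1) kerH_sub by blast
  obtain v where v: "v \<in> kerH n HX" "dot n u v"
    using u(2) uF unfolding perp_def by blast
  have vF: "v \<in> F2vec n" using v(1) kerH_sub by blast
  have vC: "v \<notin> perp n (kerH n HZ)"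
  proof
    assume "v \<in> perp n (kerH n HZ)"
    then have "\<not> dot n v u" using u(1) unfolding perp_def by blast
    then show False using v(2) dot_sym by blast
  qed
  have npos: "n > 0"
  proof (rule ccontr)
    assume "\<not> n > 0"
    then have "n = 0" by simp
    then have "u = zv" using uF by (auto simp: F2vec_def zv_def fun_eq_iff)
    then show False using u(2) by simp
  qed
  define d where "d = css_d n HX HZ"
  define Sd where "Sd = (kerH n HZ - perp n (kerH n HX)) \<union> (kerH n HX - perp n (kerH n HZ))"
  have finSd: "finite (hw n ` Sd)"
  proof -
    have "Sd \<subseteq> F2vec n" using kerH_sub unfolding Sd_def by blast
    then have "finite Sd" by (rule finite_subset) simp
    then show ?thesis by simp
  qed
  have d_eq: "d = Min (hw n ` Sd)" by (simp add: d_def Sd_def css_d_def)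
  have uSd: "u \<in> Sd" using u by (simp add: Sd_def)
  have dle: "real d \<le> real (hw n y)" if "y \<in> Sd" for y
    using Min_le[OF finSd] that d_eq by simp
  have dpos: "real d > 0"
  proof -
    have "d \<in> hw n ` Sd" unfolding d_eq by (rule Min_in[OF finSd]) (use uSd in blast)
    then obtain y where y: "y \<in> Sd" "d = hw n y" by blast
    have yF: "y \<in> F2vec n" using y(1) kerH_sub unfolding Sd_def by blast
    have "y \<noteq> zv" using y(1) unfolding Sd_def by auto
    then show ?thesis using hw_pos[OF yF] y(2) by simp
  qed
  define M where "M = min (\<epsilon>0 / 2) (min (c2 / (4 * c1)) (real d / (2 * c1 * real n)))"
  have Mpos: "M > 0" using cpos dpos npos by (simp add: M_def)
  have M1: "M \<le> \<epsilon>0 / 2" and M2: "M \<le> c2 / (4 * c1)" and M3: "M \<le> real d / (2 * c1 * real n)"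
    by (simp_all add: M_def)
  define e where "e = M / 2"
  have epos: "e > 0" using Mpos by (simp add: e_def)
  have e2: "2 * e < \<epsilon>0" using M1 cpos by (simp add: e_def)
  have small: "4 * c1 * e * real n < c2 * real n"
  proof -
    have "4 * c1 * M \<le> c2" using M2 cpos by (simp add: pos_le_divide_eq mult.commute)
    moreover have "4 * c1 * e = (4 * c1 * M) / 2" by (simp add: e_def)
    ultimately have "4 * c1 * e < c2" using cpos by linarith
    then show ?thesis using npos by simp
  qed
  have dist: "2 * c1 * e * real n < real d"
  proof -
    have "M * (2 * c1 * real n) \<le> real d" using M3 cpos npos by (simp add: pos_le_divide_eq)
    then have "2 * c1 * e * real n \<le> real d / 2" by (simp add: e_def algebra_simps)
    then show ?thesis using dpos by linarith
  qed
  have eps': "\<epsilon> < M / 1000" using eps unfolding M_def d_def by simp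
  have cl: "(\<forall>y\<in>G_eps n HX (2*e). real (coset_wt n (perp n (kerH n HZ)) y) \<le> c1 * (2*e) * real n
                          \<or> real (coset_wt n (perp n (kerH n HZ)) y) \<ge> c2 * real n) \<and>
        (\<forall>y\<in>G_eps n HZ (2*e). real (coset_wt n (perp n (kerH n HX)) y) \<le> c1 * (2*e) * real n
                          \<or> real (coset_wt n (perp n (kerH n HX)) y) \<ge> c2 * real n)"
    using clus epos e2 unfolding clustering_def by simp
  interpret X: clus n HX HZ c1 c2 e "real d"
  proof
    show "set HX \<subseteq> F2vec n" by (rule rowsX)
    show "set HZ \<subseteq> F2vec n" by (rule rowsZ)
    show "\<And>a b. a \<in> set HX \<Longrightarrow> b \<in> set HZ \<Longrightarrow> \<not> dot n a b" by (rule orthXZ)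
    show "\<And>y. y \<in> G_eps n HX (2*e) \<Longrightarrow> real (coset_wt n (perp n (kerH n HZ)) y) \<le> c1 * (2*e) * real n
      \<or> real (coset_wt n (perp n (kerH n HZ)) y) \<ge> c2 * real n" using cl by blast
    show "e > 0" by (rule epos)
    show "c1 > 0" by (rule cpos)
    show "4 * c1 * e * real n < c2 * real n" by (rule small)
    show "2 * c1 * e * real n < real d" by (rule dist)
    show "\<And>y. y \<in> kerH n HX - perp n (kerH n HZ) \<Longrightarrow> real d \<le> real (hw n y)"
      using dle unfolding Sd_def by blast
  qed
  interpret Z: clus n HZ HX c1 c2 e "real d"
  proof
    show "set HZ \<subseteq> F2vec n" by (rule rowsZ)
    show "set HX \<subseteq> F2vec n" by (rule rowsX)
    show "\<And>a b. a \<in> set HZ \<Longrightarrow> b \<in> set HX \<Longrightarrow> \<not> dot n a b" by (rule orthZX)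
    show "\<And>y. y \<in> G_eps n HZ (2*e) \<Longrightarrow> real (coset_wt n (perp n (kerH n HX)) y) \<le> c1 * (2*e) * real n
      \<or> real (coset_wt n (perp n (kerH n HX)) y) \<ge> c2 * real n" using cl by blast
    show "e > 0" by (rule epos)
    show "c1 > 0" by (rule cpos)
    show "4 * c1 * e * real n < c2 * real n" by (rule small)
    show "2 * c1 * e * real n < real d" by (rule dist)
    show "\<And>y. y \<in> kerH n HZ - perp n (kerH n HX) \<Longrightarrow> real d \<le> real (hw n y)"
      using dle unfolding Sd_def by blast
  qed
  define TX where "TX = (\<Sum>x\<in>F2vec n. D_X n \<rho> x * real (synd_wt n HX x)) / real (length HX)"
  define TZ where "TZ = (\<Sum>x\<in>F2vec n. D_Z n \<rho> x * real (synd_wt n HZ x)) / real (length HZ)"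
  have eX: "Re (\<Sum>x\<in>F2vec n. \<Sum>y\<in>F2vec n. ham_X HX x y * \<rho> y x) = TX"
    unfolding TX_def by (rule trace_X[OF rowsX rho])
  have eZ: "Re (\<Sum>x\<in>F2vec n. \<Sum>y\<in>F2vec n. ham_Z n HZ x y * \<rho> y x) = TZ"
    unfolding TZ_def by (rule trace_Z[OF rowsZ rho])
  have en: "TX + TZ \<le> 2 * \<epsilon>"
    using energy energy_split[of n HX HZ \<rho>, unfolded eX eZ] add_divide_distrib[of TX TZ 2] by linarith
  have TXnn: "TX \<ge> 0" unfolding TX_def
    by (intro divide_nonneg_nonneg sum_nonneg mult_nonneg_nonneg) (simp_all add: D_nonneg[OF rho])
  have TZnn: "TZ \<ge> 0" unfolding TZ_def
    by (intro divide_nonneg_nonneg sum_nonneg mult_nonneg_nonneg) (simp_all add: D_nonneg[OF rho])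
  have mXpos: "real (length HX) > 0" using mX by simp
  have mZpos: "real (length HZ) > 0" using mZ by simp
  have outX: "sum (D_X n \<rho>) (F2vec n - G_eps n HX e) < 0.004"
  proof -
    have "e * real (length HX) * sum (D_X n \<rho>) (F2vec n - G_eps n HX e)
        \<le> (\<Sum>x\<in>F2vec n. D_X n \<rho> x * real (synd_wt n HX x))"
      by (rule markov_gen) (auto simp: D_nonneg[OF rho] G_eps_def)
    also have "\<dots> = TX * real (length HX)" using mXpos by (simp add: TX_def)
    finally have "e * sum (D_X n \<rho>) (F2vec n - G_eps n HX e) \<le> TX"
      using mXpos by (simp add: mult.commute mult.left_commute)
    also have "TX \<le> 2 * \<epsilon>" using en TZnn by linarith
    also have "2 * \<epsilon> < 0.004 * e" using eps' by (simp add: e_def)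
    finally show ?thesis using epos by simp
  qed
  have outZ: "sum (D_Z n \<rho>) (F2vec n - G_eps n HZ e) < 0.004"
  proof -
    have "e * real (length HZ) * sum (D_Z n \<rho>) (F2vec n - G_eps n HZ e)
        \<le> (\<Sum>x\<in>F2vec n. D_Z n \<rho> x * real (synd_wt n HZ x))"
      by (rule markov_gen) (auto simp: D_nonneg[OF rho] G_eps_def)
    also have "\<dots> = TZ * real (length HZ)" using mZpos by (simp add: TZ_def)
    finally have "e * sum (D_Z n \<rho>) (F2vec n - G_eps n HZ e) \<le> TZ"
      using mZpos by (simp add: mult.commute mult.left_commute)
    also have "TZ \<le> 2 * \<epsilon>" using en TXnn by linarith
    also have "2 * \<epsilon> < 0.004 * e" using eps' by (simp add: e_def)
    finally show ?thesis using epos by simp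
  qed
  obtain aX where aX: "aX \<in> G_eps n HX e" "sum (D_X n \<rho>) {b\<in>G_eps n HX e. X.R aX b} > 0.956"
    using X.dominant[OF D_nonneg(1)[OF rho] sum_D_X[OF rho] outX nsX] by blast
  obtain aZ where aZ: "aZ \<in> G_eps n HZ e" "sum (D_Z n \<rho>) {b\<in>G_eps n HZ e. Z.R aZ b} > 0.956"
    using Z.dominant[OF D_nonneg(2)[OF rho] sum_D_Z[OF rho] outZ nsZ] by blast
  define AX where "AX = {b\<in>G_eps n HX e. X.R aX b}"
  define AZ where "AZ = {b\<in>G_eps n HZ e. Z.R aZ b}"
  have AXF: "AX \<subseteq> F2vec n" using G_sub unfolding AX_def by blast
  have AZF: "AZ \<subseteq> F2vec n" using G_sub unfolding AZ_def by blast
  have eta: "sum (D_Z n \<rho>) (F2vec n - AZ) < 0.044"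
  proof -
    have "sum (D_Z n \<rho>) (F2vec n) = sum (D_Z n \<rho>) (F2vec n - AZ) + sum (D_Z n \<rho>) AZ"
      by (rule sum.subset_diff[OF AZF finite_F2vec])
    then show ?thesis using sum_D_Z[OF rho] aZ(2) unfolding AZ_def by simp
  qed
  have Binv: "vadd x r \<in> AX" if x: "x \<in> AX" and r: "r \<in> set HZ" for x r
  proof -
    have xG: "x \<in> G_eps n HX e" and Rx: "X.R aX x" using x by (auto simp: AX_def)
    have "vadd x r \<in> G_eps n HX e" "X.R x (vadd x r)" using X.row_shift[OF xG r] by auto
    then show ?thesis using X.R_trans[OF aX(1) xG] Rx unfolding AX_def by blast
  qed
  have Aprop: "\<not> dot n v (vadd z z')"
    if z: "z \<in> AZ" "z' \<in> AZ" "vadd z z' \<in> kerH n HZ" for z z'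
  proof -
    have zG: "z \<in> G_eps n HZ e" "Z.R aZ z" using z(1) by (auto simp: AZ_def)
    have z'G: "z' \<in> G_eps n HZ e" "Z.R aZ z'" using z(2) by (auto simp: AZ_def)
    have "Z.R z aZ" using Z.R_sym zG(2) by blast
    then have "Z.R z z'" using Z.R_trans[OF zG(1) aZ(1) z'G(1)] z'G(2) by blast
    then have "vadd z z' \<in> perp n (kerH n HX)" using Z.ker_class z(3) by blast
    then have "\<not> dot n (vadd z z') v" using v(1) unfolding perp_def by blast
    then show ?thesis using dot_sym by blast
  qed
  have qc: "(\<Sum>x\<in>AX. D_X n \<rho> (vadd x v)) \<ge> 3/5 * (\<Sum>x\<in>AX. D_X n \<rho> x) - 6 * (\<Sum>z\<in>F2vec n - AZ. D_Z n \<rho> z)"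
    by (rule quantum_core[OF rho AXF vF rowsZ Binv Aprop])
  have big: "(\<Sum>x\<in>AX. D_X n \<rho> (vadd x v)) \<ge> 0.02"
    using qc aX(2) eta unfolding AX_def by simp
  define S1 where "S1 = (\<lambda>x. vadd x v) ` AX"
  have injv: "inj_on (\<lambda>x. vadd x v) AX"
    by (rule inj_onI) (metis vadd_cancel(1))
  have sS1: "sum (D_X n \<rho>) S1 \<ge> 0.02"
    using big by (simp add: S1_def sum.reindex[OF injv])
  have S1F: "S1 \<subseteq> F2vec n" using AXF vF unfolding S1_def by auto
  have sAX: "sum (D_X n \<rho>) AX \<ge> 0.02" using aX(2) unfolding AX_def by simp
  have ne1: "AX \<noteq> {}"
  proof
    assume e0: "AX = {}"
    have "sum (D_X n \<rho>) AX = 0" by (simp only: e0 sum.empty)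
    then show False using sAX by simp
  qed
  have ne2: "S1 \<noteq> {}"
  proof
    assume e0: "S1 = {}"
    have "sum (D_X n \<rho>) S1 = 0" by (simp only: e0 sum.empty)
    then show False using sS1 by simp
  qed
  have sep: "c2 * real n \<le> real (hw n (vadd s t))" if s: "s \<in> AX" and t: "t \<in> S1" for s t
  proof -
    obtain y where y: "y \<in> AX" "t = vadd y v" using t unfolding S1_def by blast
    have sG: "s \<in> G_eps n HX e" "X.R aX s" using s by (auto simp: AX_def)
    have yG: "y \<in> G_eps n HX e" "X.R aX y" using y(1) by (auto simp: AX_def)
    have tG: "t \<in> G_eps n HX e" and nR: "\<not> X.R y t"
      using X.v_shift[OF v(1) vC yG(1)] y(2) by auto
    have "\<not> X.R s t"
    proof
      assume Rst: "X.R s t"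
      have "X.R y aX" using X.R_sym yG(2) by blast
      then have "X.R y s" using X.R_trans[OF yG(1) aX(1) sG(1)] sG(2) by blast
      then have "X.R y t" using X.R_trans[OF yG(1) sG(1) tG] Rst by blast
      then show False using nR by blast
    qed
    then show ?thesis using X.sep[OF sG(1) tG] by blast
  qed
  have "spread n (D_X n \<rho>) 0.02 c2"
    unfolding spread_def
    apply (rule exI[of _ AX], rule exI[of _ S1])
    apply (intro conjI)
    using AXF S1F sAX sS1 ne1 ne2 sep by simp_all
  then show False using nsX by blast
qed

end
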